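(* Let $i\ge 1$ be an integer and let $\mathcal L_1,\mathcal L_2$ be countable classes of linear orders such that each $L\in\mathcal L_1\cup\mathcal L_2$ is isomorphic to a linear order of the form $\omega\cdot\mathbf i+K$ where $\omega\cdot\mathbf i$ is not isomorphic to any interval of $K$. Then $\mathcal L_1=\mathcal L_2$ (as classes of isomorphism types) if and only if $\mathrm{Shuf}(\mathcal L_1)\cong\mathrm{Shuf}(\mathcal L_2)$. Moreover, if $\mathrm{Shuf}(\mathcal L_1)$ contains an interval isomorphic to $\omega\cdot(\mathbf{i+1})$, then there is a linear order $K$ with $\omega\cdot(\mathbf{i+1})+K\in\mathcal L_1$ (up to isomorphism).
   Context: $\mathbf n$ is the finite linear order with $n$ elements, $\omega$ the order type of $(\mathbb N;\le)$, $L_1+L_2$ the ordered sum ($L_1$ before $L_2$), and $L_1\cdot L_2$ is the sum over $L_2$ of copies of $L_1$ (so $\omega\cdot\mathbf i$ is $i$ copies of $\omega$ in sequence). An interval is a convex subset. For a countable set $I$, a dense $I$-coloring of $\mathbb Q$ is a map $c:\mathbb Q\to I$ taking every value of $I$ between any two rationals; for $\mathcal L=\{L_j\mid j\in I\}$, $\mathrm{Shuf}(\mathcal L)=\sum_{x\in\mathbb Q}L_{c(x)}$ (independent of $c$ up to isomorphism). "$\mathcal L_1=\mathcal L_2$" means every member of each class is isomorphic to a member of the other; "$L\in\mathcal L$" means $\mathcal L$ contains an order isomorphic to $L$. *)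

theory Defs
  imports Main "HOL-Library.Countable_Set"
begin

text \<open>Linear orders are represented as reflexive relations (library notion Linear_order r,
  carrier Field r).\<close>

definition ord_iso :: "'a rel \<Rightarrow> 'b rel \<Rightarrow> bool" where
  "ord_iso r s \<longleftrightarrow> (\<exists>f. bij_betw f (Field r) (Field s) \<and>
     (\<forall>a\<in>Field r. \<forall>b\<in>Field r. (a, b) \<in> r \<longleftrightarrow> (f a, f b) \<in> s))"

definition is_interval :: "'a rel \<Rightarrow> 'a set \<Rightarrow> bool" where
  "is_interval r J \<longleftrightarrow> J \<subseteq> Field r \<and>
     (\<forall>x\<in>J. \<forall>z\<in>J. \<forall>y. (x, y) \<in> r \<and> (y, z) \<in> r \<longrightarrow> y \<in> J)"

definition osum :: "'a rel \<Rightarrow> 'b rel \<Rightarrow> ('a + 'b) rel" where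
  "osum r s = {(Inl a, Inl b) | a b. (a, b) \<in> r} \<union> {(Inr a, Inr b) | a b. (a, b) \<in> s}
     \<union> {(Inl a, Inr b) | a b. a \<in> Field r \<and> b \<in> Field s}"

definition omega_times :: "nat \<Rightarrow> (nat \<times> nat) rel" where
  "omega_times i = {((k, n), (k', n')) | k n k' n'. k < i \<and> k' < i \<and>
     (k < k' \<or> (k = k' \<and> n \<le> n'))}"

definition dense_coloring :: "'i set \<Rightarrow> (rat \<Rightarrow> 'i) \<Rightarrow> bool" where
  "dense_coloring I c \<longleftrightarrow> (\<forall>x. c x \<in> I) \<and>
     (\<forall>x y. x < y \<longrightarrow> (\<forall>j\<in>I. \<exists>z. x < z \<and> z < y \<and> c z = j))"

definition shuf_col :: "(rat \<Rightarrow> 'i) \<Rightarrow> ('i \<Rightarrow> 'a rel) \<Rightarrow> (rat \<times> 'a) rel" where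
  "shuf_col c L = {((x, a), (y, b)) | x a y b. a \<in> Field (L (c x)) \<and> b \<in> Field (L (c y)) \<and>
     (x < y \<or> (x = y \<and> (a, b) \<in> L (c x)))}"

definition Shuf :: "'i set \<Rightarrow> ('i \<Rightarrow> 'a rel) \<Rightarrow> (rat \<times> 'a) rel" where
  "Shuf I L = shuf_col (SOME c. dense_coloring I c) L"

definition class_eq :: "'i set \<Rightarrow> ('i \<Rightarrow> 'a rel) \<Rightarrow> 'j set \<Rightarrow> ('j \<Rightarrow> 'b rel) \<Rightarrow> bool" where
  "class_eq I L J M \<longleftrightarrow> (\<forall>i\<in>I. \<exists>j\<in>J. ord_iso (L i) (M j)) \<and> (\<forall>j\<in>J. \<exists>i\<in>I. ord_iso (M j) (L i))"

text \<open>L is isomorphic to omega\<cdot>i + K with omega\<cdot>i not isomorphic to any interval of K.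
  K can be taken on the carrier type of L (it is isomorphic to a final segment of L).\<close>
definition good_form :: "nat \<Rightarrow> 'a rel \<Rightarrow> bool" where
  "good_form i L \<longleftrightarrow> (\<exists>K :: 'a rel. Linear_order K \<and> ord_iso L (osum (omega_times i) K) \<and>
     \<not> (\<exists>J. is_interval K J \<and> ord_iso (omega_times i) (Restr K J)))"

end

theory Submission
  imports Defs
begin


definition iso_on :: "('a \<Rightarrow> 'b) \<Rightarrow> 'a rel \<Rightarrow> 'b rel \<Rightarrow> bool" where
  "iso_on f r s \<longleftrightarrow> bij_betw f (Field r) (Field s) \<and>
     (\<forall>a\<in>Field r. \<forall>b\<in>Field r. (a, b) \<in> r \<longleftrightarrow> (f a, f b) \<in> s)"

lemma ord_iso_iff: "ord_iso r s \<longleftrightarrow> (\<exists>f. iso_on f r s)"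
  by (simp add: ord_iso_def iso_on_def)

lemma iso_on_inv:
  assumes "iso_on f r s" shows "iso_on (inv_into (Field r) f) s r"
proof -
  have b: "bij_betw f (Field r) (Field s)" and p: "\<forall>a\<in>Field r. \<forall>b\<in>Field r. (a, b) \<in> r \<longleftrightarrow> (f a, f b) \<in> s"
    using assms by (auto simp: iso_on_def)
  have b2: "bij_betw (inv_into (Field r) f) (Field s) (Field r)" using b by (rule bij_betw_inv_into)
  show ?thesis unfolding iso_on_def
  proof (intro conjI b2 ballI)
    fix a b assume a: "a \<in> Field s" and bb: "b \<in> Field s"
    have fa: "f (inv_into (Field r) f a) = a" using a b by (simp add: bij_betw_inv_into_right)
    have fb: "f (inv_into (Field r) f b) = b" using bb b by (simp add: bij_betw_inv_into_right)
    have "inv_into (Field r) f a \<in> Field r" "inv_into (Field r) f b \<in> Field r"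
      using a bb b2 by (auto simp: bij_betw_def)
    then show "((a, b) \<in> s) = ((inv_into (Field r) f a, inv_into (Field r) f b) \<in> r)"
      using p fa fb by metis
  qed
qed

lemma iso_on_comp:
  assumes "iso_on f r s" "iso_on g s t" shows "iso_on (g \<circ> f) r t"
proof -
  have b: "bij_betw (g \<circ> f) (Field r) (Field t)"
    using assms unfolding iso_on_def using bij_betw_trans by blast
  have m: "\<forall>a\<in>Field r. f a \<in> Field s" using assms(1) unfolding iso_on_def bij_betw_def by blast
  show ?thesis unfolding iso_on_def
  proof (intro conjI b ballI)
    fix a b assume "a \<in> Field r" "b \<in> Field r"
    then show "((a, b) \<in> r) = (((g \<circ> f) a, (g \<circ> f) b) \<in> t)"
      using assms m unfolding iso_on_def by auto
  qed
qed

lemma iso_on_id: "iso_on id r r" by (simp add: iso_on_def)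

lemma ord_iso_refl: "ord_iso r r" unfolding ord_iso_iff using iso_on_id by blast
lemma ord_iso_sym: "ord_iso r s \<Longrightarrow> ord_iso s r" unfolding ord_iso_iff using iso_on_inv by blast
lemma ord_iso_trans: "ord_iso r s \<Longrightarrow> ord_iso s t \<Longrightarrow> ord_iso r t"
  unfolding ord_iso_iff using iso_on_comp by blast

lemma iso_on_mem: "iso_on f r s \<Longrightarrow> a \<in> Field r \<Longrightarrow> f a \<in> Field s"
  by (auto simp: iso_on_def bij_betw_def)

lemma iso_on_rel: "iso_on f r s \<Longrightarrow> a \<in> Field r \<Longrightarrow> b \<in> Field r \<Longrightarrow> (a, b) \<in> r \<longleftrightarrow> (f a, f b) \<in> s"
  by (auto simp: iso_on_def)

lemma iso_on_inj: "iso_on f r s \<Longrightarrow> a \<in> Field r \<Longrightarrow> b \<in> Field r \<Longrightarrow> f a = f b \<longleftrightarrow> a = b"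
  by (auto simp: iso_on_def bij_betw_def inj_on_def)

lemma iso_on_surj: "iso_on f r s \<Longrightarrow> y \<in> Field s \<Longrightarrow> \<exists>x\<in>Field r. f x = y"
  unfolding iso_on_def bij_betw_def by (metis imageE)

lemma Field_Restr_refl: "refl_on (Field r) r \<Longrightarrow> A \<subseteq> Field r \<Longrightarrow> Field (Restr r A) = A"
  unfolding Field_def refl_on_def by blast

lemma refl_of_lin: "Linear_order r \<Longrightarrow> refl_on (Field r) r"
  by (simp add: linear_order_on_def partial_order_on_def preorder_on_def)

lemma iso_on_Restr:
  assumes "iso_on f r s" "refl_on (Field r) r" "refl_on (Field s) s" "A \<subseteq> Field r"
  shows "iso_on f (Restr r A) (Restr s (f ` A))"
proof -
  have fa: "f ` A \<subseteq> Field s" using iso_on_mem[OF assms(1)] assms(4) by blast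
  have F1: "Field (Restr r A) = A" using Field_Restr_refl assms(2,4) by blast
  have F2: "Field (Restr s (f ` A)) = f ` A" using Field_Restr_refl assms(3) fa by blast
  have inj0: "inj_on f (Field r)" using assms(1) unfolding iso_on_def bij_betw_def by blast
  have inj: "inj_on f A" using inj_on_subset[OF inj0 assms(4)] .
  show ?thesis unfolding iso_on_def F1 F2
  proof (intro conjI ballI)
    show "bij_betw f A (f ` A)" using inj by (simp add: bij_betw_imageI)
    fix a b assume ab: "a \<in> A" "b \<in> A"
    then have "a \<in> Field r" "b \<in> Field r" using assms(4) by blast+
    then have e: "(a, b) \<in> r \<longleftrightarrow> (f a, f b) \<in> s" using iso_on_rel[OF assms(1)] by blast
    show "((a, b) \<in> Restr r A) = ((f a, f b) \<in> Restr s (f ` A))"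
      using e ab by blast
  qed
qed

lemma iso_on_interval:
  assumes "iso_on f r s" "is_interval r J" shows "is_interval s (f ` J)"
  unfolding is_interval_def
proof (intro conjI ballI allI impI)
  have JF: "J \<subseteq> Field r" using assms(2) by (simp add: is_interval_def)
  then show "f ` J \<subseteq> Field s" using iso_on_mem[OF assms(1)] by blast
  fix x z y assume x: "x \<in> f ` J" and z: "z \<in> f ` J" and y: "(x, y) \<in> s \<and> (y, z) \<in> s"
  then have "y \<in> Field s" by (blast intro: FieldI2)
  then obtain y' where y': "y' \<in> Field r" "f y' = y" using iso_on_surj[OF assms(1)] by blast
  obtain x' where x': "x' \<in> J" "x = f x'" using x by blast
  obtain z' where z': "z' \<in> J" "z = f z'" using z by blast
  have "(x', y') \<in> r" using iso_on_rel[OF assms(1), of x' y'] x' y' y JF by blast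
  moreover have "(y', z') \<in> r" using iso_on_rel[OF assms(1), of y' z'] z' y' y JF by blast
  ultimately have "y' \<in> J" using assms(2) x'(1) z'(1) unfolding is_interval_def by blast
  then show "y \<in> f ` J" using y' by blast
qed

definition desc :: "'a rel \<Rightarrow> 'a set \<Rightarrow> (nat \<Rightarrow> 'a) \<Rightarrow> bool" where
  "desc r A f \<longleftrightarrow> (\<forall>n. f n \<in> A \<and> (f (Suc n), f n) \<in> r \<and> f (Suc n) \<noteq> f n)"

lemma desc_iso:
  assumes "iso_on h r s" "A \<subseteq> Field r" "desc r A f" shows "desc s (h ` A) (h \<circ> f)"
  unfolding desc_def
proof
  fix n
  have a: "f n \<in> A" "f (Suc n) \<in> A" "(f (Suc n), f n) \<in> r" "f (Suc n) \<noteq> f n"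
    using assms(3) unfolding desc_def by blast+
  then have b: "f n \<in> Field r" "f (Suc n) \<in> Field r" using assms(2) by blast+
  have 1: "(h (f (Suc n)), h (f n)) \<in> s" using iso_on_rel[OF assms(1) b(2) b(1)] a(3) by blast
  have 2: "h (f (Suc n)) \<noteq> h (f n)" using iso_on_inj[OF assms(1) b(2) b(1)] a(4) by blast
  show "(h \<circ> f) n \<in> h ` A \<and> ((h \<circ> f) (Suc n), (h \<circ> f) n) \<in> s \<and> (h \<circ> f) (Suc n) \<noteq> (h \<circ> f) n"
    using a(1) 1 2 by simp
qed

lemma omega_mem: "((k, n), (k', n')) \<in> omega_times m \<longleftrightarrow> k < m \<and> k' < m \<and> (k < k' \<or> (k = k' \<and> n \<le> n'))"
  by (simp add: omega_times_def)

lemma Field_omega: "Field (omega_times m) = {a. fst a < m}"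
proof -
  have "Field (omega_times m) \<subseteq> {a. fst a < m}" by (auto simp: Field_def omega_times_def)
  moreover have "{a. fst a < m} \<subseteq> Field (omega_times m)"
  proof
    fix a :: "nat \<times> nat" assume "a \<in> {a. fst a < m}"
    then have "(a, a) \<in> omega_times m" by (cases a) (simp add: omega_mem)
    then show "a \<in> Field (omega_times m)" by (auto simp: Field_def)
  qed
  ultimately show ?thesis by blast
qed

lemma omega_no_desc: "\<not> desc (omega_times m) A f"
proof
  assume d: "desc (omega_times m) A f"
  have w: "wf (lex_prod less_than less_than)" by (intro wf_lex_prod wf_less_than)
  have "\<forall>n. (f (Suc n), f n) \<in> lex_prod less_than less_than"
  proof
    fix n
    have "(f (Suc n), f n) \<in> omega_times m" "f (Suc n) \<noteq> f n" using d by (auto simp: desc_def)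
    then show "(f (Suc n), f n) \<in> lex_prod less_than less_than"
      by (cases "f (Suc n)"; cases "f n") (auto simp: omega_mem)
  qed
  then show False using w wf_iff_no_infinite_down_chain by blast
qed

lemma Linear_omega: "Linear_order (omega_times m)"
  unfolding linear_order_on_def partial_order_on_def preorder_on_def refl_on_def trans_def antisym_def total_on_def Field_omega
  by (auto simp: omega_times_def)

lemma Restr_omega: "Restr (omega_times (Suc m)) {a. fst a < m} = omega_times m"
  by (auto simp: omega_times_def)



lemma shuf_mem: "((x, a), (y, b)) \<in> shuf_col c L \<longleftrightarrow>
   a \<in> Field (L (c x)) \<and> b \<in> Field (L (c y)) \<and> (x < y \<or> (x = y \<and> (a, b) \<in> L (c x)))"
  by (simp add: shuf_col_def)

lemma Field_shuf:
  assumes "\<forall>q. refl_on (Field (L (c q))) (L (c q))"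
  shows "Field (shuf_col c L) = {p. snd p \<in> Field (L (c (fst p)))}"
proof
  show "Field (shuf_col c L) \<subseteq> {p. snd p \<in> Field (L (c (fst p)))}"
  proof
    fix p assume "p \<in> Field (shuf_col c L)"
    then obtain p' where "(p, p') \<in> shuf_col c L \<or> (p', p) \<in> shuf_col c L" unfolding Field_def by blast
    then show "p \<in> {p. snd p \<in> Field (L (c (fst p)))}"
      by (cases p; cases p') (simp only: shuf_mem mem_Collect_eq fst_conv snd_conv; blast)
  qed
  show "{p. snd p \<in> Field (L (c (fst p)))} \<subseteq> Field (shuf_col c L)"
  proof
    fix p assume p: "p \<in> {p. snd p \<in> Field (L (c (fst p)))}"
    obtain x a where xa: "p = (x, a)" by (cases p)
    have "a \<in> Field (L (c x))" using p xa by simp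
    then have "(a, a) \<in> L (c x)" using assms unfolding refl_on_def by blast
    then have "((x, a), (x, a)) \<in> shuf_col c L" using \<open>a \<in> Field (L (c x))\<close> by (simp add: shuf_mem)
    then show "p \<in> Field (shuf_col c L)" using xa by (blast intro: FieldI1)
  qed
qed

lemma Field_shuf_mem:
  assumes "\<forall>q. refl_on (Field (L (c q))) (L (c q))"
  shows "(x, a) \<in> Field (shuf_col c L) \<longleftrightarrow> a \<in> Field (L (c x))"
  using Field_shuf[of L c, OF assms] by simp

lemma Linear_shuf:
  assumes lin: "\<forall>q. Linear_order (L (c q))"
  shows "Linear_order (shuf_col c L)"
proof -
  have refl: "\<forall>q. refl_on (Field (L (c q))) (L (c q))" using lin refl_of_lin by blast
  have tr: "\<forall>q. trans (L (c q))" using lin unfolding linear_order_on_def partial_order_on_def preorder_on_def by blast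
  have an: "\<forall>q. antisym (L (c q))" using lin unfolding linear_order_on_def partial_order_on_def by blast
  have to: "\<forall>q. total_on (Field (L (c q))) (L (c q))" using lin unfolding linear_order_on_def by blast
  have FS: "Field (shuf_col c L) = {p. snd p \<in> Field (L (c (fst p)))}" using Field_shuf[of L c, OF refl] .
  have R: "refl_on (Field (shuf_col c L)) (shuf_col c L)"
    unfolding refl_on_def
  proof (intro ballI)
    fix p assume "p \<in> Field (shuf_col c L)"
    then have "snd p \<in> Field (L (c (fst p)))" using FS by blast
    moreover then have "(snd p, snd p) \<in> L (c (fst p))" using refl unfolding refl_on_def by blast
    ultimately show "(p, p) \<in> shuf_col c L" by (cases p) (simp add: shuf_mem)
  qed
  have T: "trans (shuf_col c L)"
    unfolding trans_def
  proof (intro allI impI)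
    fix p1 p2 p3 assume h: "(p1, p2) \<in> shuf_col c L" "(p2, p3) \<in> shuf_col c L"
    obtain x a where 1: "p1 = (x, a)" by (cases p1)
    obtain y b where 2: "p2 = (y, b)" by (cases p2)
    obtain z d where 3: "p3 = (z, d)" by (cases p3)
    have h1: "a \<in> Field (L (c x))" "b \<in> Field (L (c y))" "x < y \<or> (x = y \<and> (a, b) \<in> L (c x))"
      using h(1) 1 2 by (simp_all add: shuf_mem)
    have h2: "d \<in> Field (L (c z))" "y < z \<or> (y = z \<and> (b, d) \<in> L (c y))"
      using h(2) 2 3 by (simp_all add: shuf_mem)
    have "x < z \<or> (x = z \<and> (a, d) \<in> L (c x))"
    proof (cases "x < y")
      case True then show ?thesis using h2 by auto
    next
      case False
      then have "x = y" "(a, b) \<in> L (c x)" using h1 by auto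
      then show ?thesis using h2 tr unfolding trans_def by blast
    qed
    then show "(p1, p3) \<in> shuf_col c L" using 1 3 h1 h2 by (simp add: shuf_mem)
  qed
  have A: "antisym (shuf_col c L)"
    unfolding antisym_def
  proof (intro allI impI)
    fix p1 p2 assume h: "(p1, p2) \<in> shuf_col c L" "(p2, p1) \<in> shuf_col c L"
    obtain x a where 1: "p1 = (x, a)" by (cases p1)
    obtain y b where 2: "p2 = (y, b)" by (cases p2)
    have "x < y \<or> (x = y \<and> (a, b) \<in> L (c x))" "y < x \<or> (y = x \<and> (b, a) \<in> L (c y))"
      using h 1 2 by (simp_all add: shuf_mem)
    then have "x = y" "(a, b) \<in> L (c x)" "(b, a) \<in> L (c x)" by auto
    then show "p1 = p2" using an 1 2 unfolding antisym_def by blast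
  qed
  have To: "total_on (Field (shuf_col c L)) (shuf_col c L)"
    unfolding total_on_def
  proof (intro ballI impI)
    fix p1 p2 assume p: "p1 \<in> Field (shuf_col c L)" "p2 \<in> Field (shuf_col c L)" "p1 \<noteq> p2"
    obtain x a where 1: "p1 = (x, a)" by (cases p1)
    obtain y b where 2: "p2 = (y, b)" by (cases p2)
    have f: "a \<in> Field (L (c x))" "b \<in> Field (L (c y))" using p FS 1 2 by auto
    show "(p1, p2) \<in> shuf_col c L \<or> (p2, p1) \<in> shuf_col c L"
    proof (cases "x = y")
      case True
      then have "a \<noteq> b" using p 1 2 by simp
      then have "(a, b) \<in> L (c x) \<or> (b, a) \<in> L (c x)" using to f True unfolding total_on_def by blast
      then show ?thesis using 1 2 f True by (auto simp: shuf_mem)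
    next
      case False
      then have "x < y \<or> y < x" by (simp add: neq_iff)
      then show ?thesis using 1 2 f by (auto simp: shuf_mem)
    qed
  qed
  show ?thesis unfolding linear_order_on_def partial_order_on_def preorder_on_def
    using R T A To FieldI1 FieldI2 by fast
qed



definition goodP :: "(rat \<Rightarrow> 'i) \<Rightarrow> (rat \<Rightarrow> 'j) \<Rightarrow> ('i \<Rightarrow> 'j \<Rightarrow> bool) \<Rightarrow> (rat \<times> rat) set \<Rightarrow> bool" where
  "goodP c1 c2 R P \<longleftrightarrow> finite P \<and> (\<forall>p\<in>P. \<forall>p'\<in>P. fst p < fst p' \<longleftrightarrow> snd p < snd p') \<and>
     (\<forall>p\<in>P. R (c1 (fst p)) (c2 (snd p)))"

lemma goodP_swap: "goodP c1 c2 R P \<Longrightarrow> goodP c2 c1 (\<lambda>b a. R a b) (prod.swap ` P)"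
  unfolding goodP_def by auto

lemma goodP_swap': "goodP c2 c1 (\<lambda>b a. R a b) (prod.swap ` P) \<Longrightarrow> goodP c1 c2 R P"
proof -
  assume "goodP c2 c1 (\<lambda>b a. R a b) (prod.swap ` P)"
  then have "goodP c1 c2 (\<lambda>a b. R a b) (prod.swap ` prod.swap ` P)" by (rule goodP_swap)
  moreover have "prod.swap ` prod.swap ` P = P" by (simp add: image_image)
  ultimately show ?thesis by simp
qed

lemma forth_step:
  assumes g: "goodP c1 c2 R P"
    and dens2: "\<forall>x y. x < y \<longrightarrow> (\<forall>j\<in>I2. \<exists>z. x < z \<and> z < y \<and> c2 z = j)"
    and tot: "\<forall>a\<in>I1. \<exists>b\<in>I2. R a b" and q1: "c1 q \<in> I1"
  shows "\<exists>r. goodP c1 c2 R (insert (q, r) P)"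
proof (cases "\<exists>b. (q, b) \<in> P")
  case True
  then obtain b where "(q, b) \<in> P" by blast
  then have "insert (q, b) P = P" by blast
  then show ?thesis using g by metis
next
  case False
  have fin: "finite P" and mono: "\<forall>p\<in>P. \<forall>p'\<in>P. fst p < fst p' \<longleftrightarrow> snd p < snd p'"
    and comp: "\<forall>p\<in>P. R (c1 (fst p)) (c2 (snd p))" using g unfolding goodP_def by blast+
  obtain j where j: "j \<in> I2" "R (c1 q) j" using tot q1 by blast
  define A where "A = snd ` {p\<in>P. fst p < q}"
  define B where "B = snd ` {p\<in>P. q < fst p}"
  have fA: "finite A" "finite B" using fin unfolding A_def B_def by auto
  have AB: "\<forall>a\<in>A. \<forall>b\<in>B. a < b"
  proof (intro ballI)
    fix a b assume "a \<in> A" "b \<in> B"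
    then obtain p p' where "p \<in> P" "fst p < q" "a = snd p" "p' \<in> P" "q < fst p'" "b = snd p'"
      unfolding A_def B_def by blast
    then show "a < b" using mono by (meson less_trans)
  qed
  have "\<exists>lo hi. lo < hi \<and> (\<forall>a\<in>A. a \<le> lo) \<and> (\<forall>b\<in>B. hi \<le> b)"
  proof (cases "A = {}")
    case True
    show ?thesis
    proof (cases "B = {}")
      case True
      then have "(0::rat) < 1 \<and> (\<forall>a\<in>A. a \<le> 0) \<and> (\<forall>b\<in>B. 1 \<le> b)" using \<open>A = {}\<close> by simp
      then show ?thesis by blast
    next
      case False
      have "\<forall>b\<in>B. Min B \<le> b" using fA by simp
      then have "Min B - 1 < Min B \<and> (\<forall>a\<in>A. a \<le> Min B - 1) \<and> (\<forall>b\<in>B. Min B \<le> b)" using \<open>A = {}\<close> by simp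
      then show ?thesis by blast
    qed
  next
    case False
    show ?thesis
    proof (cases "B = {}")
      case True
      have "\<forall>a\<in>A. a \<le> Max A" using fA by simp
      then have "Max A < Max A + 1 \<and> (\<forall>a\<in>A. a \<le> Max A) \<and> (\<forall>b\<in>B. Max A + 1 \<le> b)" using True by simp
      then show ?thesis by blast
    next
      case False
      have "Max A \<in> A" "Min B \<in> B" using \<open>A \<noteq> {}\<close> False fA by simp_all
      then have "Max A < Min B" using AB by blast
      moreover have "\<forall>a\<in>A. a \<le> Max A" "\<forall>b\<in>B. Min B \<le> b" using fA by simp_all
      ultimately have "Max A < Min B \<and> (\<forall>a\<in>A. a \<le> Max A) \<and> (\<forall>b\<in>B. Min B \<le> b)" by blast
      then show ?thesis by blast
    qed
  qed
  then obtain lo hi where lh: "lo < hi" "\<forall>a\<in>A. a \<le> lo" "\<forall>b\<in>B. hi \<le> b" by blast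
  obtain z where z: "lo < z" "z < hi" "c2 z = j" using dens2 lh(1) j(1) by blast
  have key: "\<forall>p\<in>P. (fst p < q \<longleftrightarrow> snd p < z) \<and> (q < fst p \<longleftrightarrow> z < snd p)"
  proof
    fix p assume p: "p \<in> P"
    have "fst p \<noteq> q" using False p by (cases p) auto
    then have "fst p < q \<or> q < fst p" by (simp add: neq_iff)
    then show "(fst p < q \<longleftrightarrow> snd p < z) \<and> (q < fst p \<longleftrightarrow> z < snd p)"
    proof
      assume "fst p < q"
      then have "snd p \<in> A" using p unfolding A_def by blast
      then have "snd p < z" using lh z by force
      then show ?thesis using \<open>fst p < q\<close> by auto
    next
      assume "q < fst p"
      then have "snd p \<in> B" using p unfolding B_def by blast
      then have "z < snd p" using lh z by force
      then show ?thesis using \<open>q < fst p\<close> by auto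
    qed
  qed
  have "goodP c1 c2 R (insert (q, z) P)"
    unfolding goodP_def
  proof (intro conjI)
    show "finite (insert (q, z) P)" using fin by simp
    show "\<forall>p\<in>insert (q, z) P. \<forall>p'\<in>insert (q, z) P. (fst p < fst p') = (snd p < snd p')"
      using mono key by auto
    show "\<forall>p\<in>insert (q, z) P. R (c1 (fst p)) (c2 (snd p))" using comp j z by auto
  qed
  then show ?thesis by blast
qed

lemma back_step:
  assumes g: "goodP c1 c2 R P"
    and dens1: "\<forall>x y. x < y \<longrightarrow> (\<forall>j\<in>I1. \<exists>z. x < z \<and> z < y \<and> c1 z = j)"
    and tot: "\<forall>b\<in>I2. \<exists>a\<in>I1. R a b" and q2: "c2 q \<in> I2"
  shows "\<exists>r. goodP c1 c2 R (insert (r, q) P)"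
proof -
  have "goodP c2 c1 (\<lambda>b a. R a b) (prod.swap ` P)" using g by (rule goodP_swap)
  then obtain r where "goodP c2 c1 (\<lambda>b a. R a b) (insert (q, r) (prod.swap ` P))"
    using forth_step[of c2 c1 "\<lambda>b a. R a b" "prod.swap ` P" I1 I2 q] dens1 tot q2 by blast
  moreover have "insert (q, r) (prod.swap ` P) = prod.swap ` (insert (r, q) P)" by simp
  ultimately show ?thesis using goodP_swap' by metis
qed



lemma back_and_forth:
  fixes c1 :: "rat \<Rightarrow> 'i" and c2 :: "rat \<Rightarrow> 'j"
  assumes dens1: "\<forall>x y. x < y \<longrightarrow> (\<forall>j\<in>I1. \<exists>z. x < z \<and> z < y \<and> c1 z = j)" and col1: "\<forall>x. c1 x \<in> I1"
    and dens2: "\<forall>x y. x < y \<longrightarrow> (\<forall>j\<in>I2. \<exists>z. x < z \<and> z < y \<and> c2 z = j)" and col2: "\<forall>x. c2 x \<in> I2"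
    and tot1: "\<forall>a\<in>I1. \<exists>b\<in>I2. R a b" and tot2: "\<forall>b\<in>I2. \<exists>a\<in>I1. R a b"
  shows "\<exists>\<phi>. (\<forall>r. \<exists>q. \<phi> q = r) \<and> (\<forall>q q'. q < q' \<longrightarrow> \<phi> q < \<phi> q') \<and> (\<forall>q. R (c1 q) (c2 (\<phi> q)))"
proof -
  define G where "G = goodP c1 c2 R"
  define fs where "fs P q = insert (q, SOME r. G (insert (q, r) P)) P" for P q
  define bs where "bs P q = insert (SOME a. G (insert (a, q) P), q) P" for P q
  define e :: "nat \<Rightarrow> rat" where "e = from_nat"
  define S where "S = rec_nat {} (\<lambda>n P. bs (fs P (e n)) (e n))"
  have S0: "S 0 = {}" unfolding S_def by simp
  have SS: "S (Suc n) = bs (fs (S n) (e n)) (e n)" for n unfolding S_def by simp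
  have fsG: "G (fs P q)" if "G P" for P q
  proof -
    have "\<exists>r. G (insert (q, r) P)" unfolding G_def
      using forth_step[of c1 c2 R P I2 I1 q] that dens2 tot1 col1 unfolding G_def by blast
    then show ?thesis unfolding fs_def by (rule someI_ex)
  qed
  have bsG: "G (bs P q)" if "G P" for P q
  proof -
    have "\<exists>a. G (insert (a, q) P)" unfolding G_def
      using back_step[of c1 c2 R P I1 I2 q] that dens1 tot2 col2 unfolding G_def by blast
    then show ?thesis unfolding bs_def by (rule someI_ex)
  qed
  have GS: "G (S n)" for n
  proof (induction n)
    case 0 then show ?case unfolding S0 G_def goodP_def by simp
  next
    case (Suc n) then show ?case unfolding SS using fsG bsG by blast
  qed
  have inc: "S n \<subseteq> S (Suc n)" for n unfolding SS fs_def bs_def by blast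
  have monoS: "S m \<subseteq> S n" if "m \<le> n" for m n
    using that
  proof (induction n rule: dec_induct)
    case base then show ?case by simp
  next
    case (step n) then show ?case using inc by blast
  qed
  have qin: "\<exists>r. (q, r) \<in> S (Suc (to_nat q))" for q
  proof -
    have eq: "e (to_nat q) = q" unfolding e_def by simp
    show ?thesis unfolding SS bs_def fs_def eq by blast
  qed
  have rin: "\<exists>a. (a, r) \<in> S (Suc (to_nat r))" for r
  proof -
    have eq: "e (to_nat r) = r" unfolding e_def by simp
    show ?thesis unfolding SS bs_def eq by blast
  qed
  define U where "U = (\<Union>n. S n)"
  have Umono: "fst p < fst p' \<longleftrightarrow> snd p < snd p'" if h: "p \<in> U" "p' \<in> U" for p p'
  proof -
    obtain m n where "p \<in> S m" "p' \<in> S n" using h unfolding U_def by blast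
    then have "p \<in> S (max m n)" "p' \<in> S (max m n)" using monoS[of m "max m n"] monoS[of n "max m n"] by auto
    then show ?thesis using GS[of "max m n"] unfolding G_def goodP_def by blast
  qed
  have Ucomp: "R (c1 (fst p)) (c2 (snd p))" if h: "p \<in> U" for p
  proof -
    obtain m where "p \<in> S m" using h unfolding U_def by blast
    then show ?thesis using GS[of m] unfolding G_def goodP_def by blast
  qed
  define \<phi> where "\<phi> q = (SOME r. (q, r) \<in> U)" for q
  have phiU: "(q, \<phi> q) \<in> U" for q
  proof -
    have "\<exists>r. (q, r) \<in> U" using qin[of q] unfolding U_def by blast
    then show ?thesis unfolding \<phi>_def by (rule someI_ex)
  qed
  have func: "r = \<phi> q" if "(q, r) \<in> U" for q r
  proof -
    have "\<not> r < \<phi> q" using Umono[OF that phiU[of q]] by simp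
    moreover have "\<not> \<phi> q < r" using Umono[OF phiU[of q] that] by simp
    ultimately show ?thesis by simp
  qed
  have "\<forall>r. \<exists>q. \<phi> q = r"
  proof
    fix r obtain a where "(a, r) \<in> S (Suc (to_nat r))" using rin by blast
    then have "(a, r) \<in> U" unfolding U_def by blast
    then show "\<exists>q. \<phi> q = r" using func by metis
  qed
  moreover have "\<forall>q q'. q < q' \<longrightarrow> \<phi> q < \<phi> q'"
    using Umono[OF phiU phiU] by simp
  moreover have "\<forall>q. R (c1 q) (c2 (\<phi> q))" using Ucomp[OF phiU] by simp
  ultimately show ?thesis by blast
qed

lemma shuf_iso:
  fixes c1 :: "rat \<Rightarrow> 'i" and c2 :: "rat \<Rightarrow> 'j" and \<phi> :: "rat \<Rightarrow> rat"
  assumes lin1: "\<forall>q. Linear_order (L1 (c1 q))" and lin2: "\<forall>q. Linear_order (L2 (c2 q))"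
    and surj: "\<forall>r. \<exists>q. \<phi> q = r" and mono: "\<forall>q q'. q < q' \<longrightarrow> \<phi> q < \<phi> q'"
    and iso: "\<forall>q. ord_iso (L1 (c1 q)) (L2 (c2 (\<phi> q)))"
  shows "ord_iso (shuf_col c1 L1) (shuf_col c2 L2)"
proof -
  define f where "f q = (SOME g. iso_on g (L1 (c1 q)) (L2 (c2 (\<phi> q))))" for q
  have f: "iso_on (f q) (L1 (c1 q)) (L2 (c2 (\<phi> q)))" for q
  proof -
    have "\<exists>g. iso_on g (L1 (c1 q)) (L2 (c2 (\<phi> q)))" using iso ord_iso_iff by blast
    then show ?thesis unfolding f_def by (rule someI_ex)
  qed
  have r1: "\<forall>q. refl_on (Field (L1 (c1 q))) (L1 (c1 q))" using lin1 refl_of_lin by blast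
  have r2: "\<forall>q. refl_on (Field (L2 (c2 q))) (L2 (c2 q))" using lin2 refl_of_lin by blast
  have F1: "(x, a) \<in> Field (shuf_col c1 L1) \<longleftrightarrow> a \<in> Field (L1 (c1 x))" for x a
    using Field_shuf_mem[of L1 c1, OF r1] .
  have F2: "(x, a) \<in> Field (shuf_col c2 L2) \<longleftrightarrow> a \<in> Field (L2 (c2 x))" for x a
    using Field_shuf_mem[of L2 c2, OF r2] .
  have inj\<phi>: "\<phi> x = \<phi> y \<longleftrightarrow> x = y" for x y
    using mono by (metis neq_iff order_less_irrefl)
  have lt\<phi>: "\<phi> x < \<phi> y \<longleftrightarrow> x < y" for x y
    using mono by (metis neq_iff order_less_asym)
  define F where "F p = (\<phi> (fst p), f (fst p) (snd p))" for p
  have "iso_on F (shuf_col c1 L1) (shuf_col c2 L2)"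
    unfolding iso_on_def bij_betw_def
  proof (intro conjI ballI)
    show "inj_on F (Field (shuf_col c1 L1))"
    proof (rule inj_onI)
      fix p p' assume p: "p \<in> Field (shuf_col c1 L1)" "p' \<in> Field (shuf_col c1 L1)" and e: "F p = F p'"
      obtain x a where 1: "p = (x, a)" by (cases p)
      obtain y b where 2: "p' = (y, b)" by (cases p')
      have "x = y" using e inj\<phi> 1 2 unfolding F_def by simp
      moreover have "a \<in> Field (L1 (c1 x))" "b \<in> Field (L1 (c1 x))" using p 1 2 F1 \<open>x = y\<close> by auto
      moreover have "f x a = f x b" using e 1 2 \<open>x = y\<close> unfolding F_def by simp
      ultimately show "p = p'" using iso_on_inj[OF f] 1 2 by blast
    qed
    show "F ` Field (shuf_col c1 L1) = Field (shuf_col c2 L2)"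
    proof
      show "F ` Field (shuf_col c1 L1) \<subseteq> Field (shuf_col c2 L2)"
      proof
        fix w assume "w \<in> F ` Field (shuf_col c1 L1)"
        then obtain x a where "a \<in> Field (L1 (c1 x))" "w = F (x, a)" using F1 by auto
        then show "w \<in> Field (shuf_col c2 L2)" unfolding F_def using F2 iso_on_mem[OF f] by simp
      qed
      show "Field (shuf_col c2 L2) \<subseteq> F ` Field (shuf_col c1 L1)"
      proof
        fix w assume w: "w \<in> Field (shuf_col c2 L2)"
        obtain y b where 2: "w = (y, b)" by (cases w)
        obtain x where x: "\<phi> x = y" using surj by blast
        have "b \<in> Field (L2 (c2 (\<phi> x)))" using w 2 F2 x by simp
        then obtain a where a: "a \<in> Field (L1 (c1 x))" "f x a = b" using iso_on_surj[OF f] by blast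
        then have "F (x, a) = w" unfolding F_def using x 2 by simp
        moreover have "(x, a) \<in> Field (shuf_col c1 L1)" using F1 a by simp
        ultimately show "w \<in> F ` Field (shuf_col c1 L1)" by blast
      qed
    qed
    fix p p' assume p: "p \<in> Field (shuf_col c1 L1)" "p' \<in> Field (shuf_col c1 L1)"
    obtain x a where 1: "p = (x, a)" by (cases p)
    obtain y b where 2: "p' = (y, b)" by (cases p')
    have a: "a \<in> Field (L1 (c1 x))" "b \<in> Field (L1 (c1 y))" using p 1 2 F1 by auto
    have fa: "f x a \<in> Field (L2 (c2 (\<phi> x)))" "f y b \<in> Field (L2 (c2 (\<phi> y)))"
      using a iso_on_mem[OF f] by auto
    show "((p, p') \<in> shuf_col c1 L1) = ((F p, F p') \<in> shuf_col c2 L2)"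
    proof (cases "x = y")
      case True
      have "(a, b) \<in> L1 (c1 x) \<longleftrightarrow> (f x a, f x b) \<in> L2 (c2 (\<phi> x))"
        using iso_on_rel[OF f] a True by blast
      then show ?thesis using 1 2 a fa True unfolding F_def by (simp add: shuf_mem)
    next
      case False
      then show ?thesis using 1 2 a fa lt\<phi> inj\<phi> unfolding F_def by (simp add: shuf_mem)
    qed
  qed
  then show ?thesis using ord_iso_iff by blast
qed



definition dy :: "rat \<Rightarrow> nat" where
  "dy q = fst (prod_decode (LEAST a. q * 2 ^ a \<in> \<int>))"

lemma odd_not_int:
  fixes w :: int and a a' :: nat
  assumes "odd w" "a' < a" "(of_int w / 2 ^ a :: rat) * 2 ^ a' \<in> \<int>"
  shows False
proof -
  obtain m where m: "(of_int w / 2 ^ a :: rat) * 2 ^ a' = of_int m" using assms(3) Ints_cases by blast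
  have a: "a = a' + (a - a')" using assms(2) by simp
  have "(2::rat) ^ a = 2 ^ a' * 2 ^ (a - a')" by (subst a) (simp add: power_add)
  then have "(of_int w :: rat) = of_int m * 2 ^ (a - a')" using m by (simp add: field_simps)
  then have "w = m * 2 ^ (a - a')" by (metis of_int_eq_iff of_int_mult of_int_numeral of_int_power)
  moreover have "even (m * 2 ^ (a - a'))" using assms(2) by simp
  ultimately show False using assms(1) by simp
qed

lemma dy_odd:
  fixes w :: int
  assumes "odd w"
  shows "dy (of_int w / 2 ^ a) = fst (prod_decode a)"
proof -
  have "(LEAST a'. (of_int w / 2 ^ a :: rat) * 2 ^ a' \<in> \<int>) = a"
  proof (rule Least_equality)
    show "(of_int w / 2 ^ a :: rat) * 2 ^ a \<in> \<int>" by simp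
    fix a' assume "(of_int w / 2 ^ a :: rat) * 2 ^ a' \<in> \<int>"
    then show "a \<le> a'" using odd_not_int[OF assms] by (meson not_le)
  qed
  then show ?thesis unfolding dy_def by simp
qed

lemma dy_dense:
  fixes x y :: rat
  assumes "x < y"
  shows "\<exists>z. x < z \<and> z < y \<and> dy z = n"
proof -
  obtain m :: nat where m: "2 / (y - x) < of_nat m" using reals_Archimedean2 by blast
  define a where "a = prod_encode (n, m)"
  have "m \<le> a" unfolding a_def by (rule le_prod_encode_2)
  have "of_nat m < (2::rat) ^ m" using less_exp[of m] by (metis of_nat_less_iff of_nat_numeral of_nat_power)
  also have "\<dots> \<le> 2 ^ a" using \<open>m \<le> a\<close> by (simp add: power_increasing)
  finally have big: "2 / (y - x) < (2::rat) ^ a" using m by linarith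
  define P :: rat where "P = 2 ^ a"
  have P0: "P > 0" unfolding P_def by simp
  have len: "2 < P * (y - x)" using big assms unfolding P_def by (simp add: field_simps)
  define t where "t = x * P"
  define w where "w = 2 * \<lfloor>(t + 1) / 2\<rfloor> + 1"
  have oo: "odd w" unfolding w_def by simp
  have f1: "(t + 1) / 2 - 1 < of_int \<lfloor>(t + 1) / 2\<rfloor>" by linarith
  have f2: "of_int \<lfloor>(t + 1) / 2\<rfloor> \<le> (t + 1) / 2" by linarith
  have lo: "t < of_int w" unfolding w_def using f1 by (simp add: field_simps)
  have hi: "of_int w < t + P * (y - x)" unfolding w_def using f2 len by (simp add: field_simps)
  define z where "z = of_int w / P"
  have "x < z" using lo P0 unfolding z_def t_def by (simp add: field_simps mult.commute)
  moreover have "z < y" unfolding z_def using hi P0 unfolding t_def by (simp add: field_simps)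
  moreover have "dy z = n" unfolding z_def P_def using dy_odd[OF oo, of a] unfolding a_def by simp
  ultimately show ?thesis by blast
qed

lemma dense_coloring_exists:
  assumes "countable I" "I \<noteq> {}"
  shows "\<exists>c. dense_coloring I c"
proof -
  define c where "c q = from_nat_into I (dy q)" for q
  have "dense_coloring I c"
    unfolding dense_coloring_def
  proof (intro conjI allI impI ballI)
    fix x show "c x \<in> I" unfolding c_def using from_nat_into[OF assms(2)] .
  next
    fix x y :: rat and j assume "x < y" "j \<in> I"
    then obtain n where n: "from_nat_into I n = j" using from_nat_into_to_nat_on[OF assms(1)] by blast
    obtain z where "x < z" "z < y" "dy z = n" using dy_dense[OF \<open>x < y\<close>] by blast
    then show "\<exists>z. x < z \<and> z < y \<and> c z = j" unfolding c_def using n by blast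
  qed
  then show ?thesis by blast
qed

lemma Shuf_dense:
  assumes "countable I" "I \<noteq> {}"
  shows "dense_coloring I (SOME c. dense_coloring I c)"
  using dense_coloring_exists[OF assms] by (rule someI_ex)



lemma osum_LL[simp]: "(Inl a, Inl b) \<in> osum r s \<longleftrightarrow> (a, b) \<in> r" by (simp add: osum_def)
lemma osum_RR[simp]: "(Inr a, Inr b) \<in> osum r s \<longleftrightarrow> (a, b) \<in> s" by (simp add: osum_def)
lemma osum_LR[simp]: "(Inl a, Inr b) \<in> osum r s \<longleftrightarrow> a \<in> Field r \<and> b \<in> Field s" by (simp add: osum_def)
lemma osum_RL[simp]: "(Inr a, Inl b) \<notin> osum r s" by (simp add: osum_def)

lemma Field_osum_L[simp]: "Inl a \<in> Field (osum r s) \<longleftrightarrow> a \<in> Field r"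
proof
  assume "Inl a \<in> Field (osum r s)"
  then obtain z where z: "(Inl a, z) \<in> osum r s \<or> (z, Inl a) \<in> osum r s" unfolding Field_def by blast
  show "a \<in> Field r"
  proof (cases z)
    case (Inl b) then show ?thesis using z by (simp add: Field_def) blast
  next
    case (Inr b) then show ?thesis using z by simp
  qed
next
  assume "a \<in> Field r"
  then obtain a' where "(a, a') \<in> r \<or> (a', a) \<in> r" unfolding Field_def by blast
  then have "(Inl a, Inl a') \<in> osum r s \<or> (Inl a', Inl a) \<in> osum r s" by simp
  then show "Inl a \<in> Field (osum r s)" unfolding Field_def by blast
qed

lemma Field_osum_R[simp]: "Inr a \<in> Field (osum r s) \<longleftrightarrow> a \<in> Field s"
proof
  assume "Inr a \<in> Field (osum r s)"
  then obtain z where z: "(Inr a, z) \<in> osum r s \<or> (z, Inr a) \<in> osum r s" unfolding Field_def by blast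
  show "a \<in> Field s"
  proof (cases z)
    case (Inr b) then show ?thesis using z by (simp add: Field_def) blast
  next
    case (Inl b) then show ?thesis using z by simp
  qed
next
  assume "a \<in> Field s"
  then obtain a' where "(a, a') \<in> s \<or> (a', a) \<in> s" unfolding Field_def by blast
  then have "(Inr a, Inr a') \<in> osum r s \<or> (Inr a', Inr a) \<in> osum r s" by simp
  then show "Inr a \<in> Field (osum r s)" unfolding Field_def by blast
qed

lemma gf_obtain:
  fixes L :: "'a rel"
  assumes "good_form i L"
  obtains K :: "'a rel" and g where "Linear_order K" "iso_on g L (osum (omega_times i) K)"
    "\<not> (\<exists>J. is_interval K J \<and> ord_iso (omega_times i) (Restr K J))"
proof -
  obtain K :: "'a rel" where K: "Linear_order K" "ord_iso L (osum (omega_times i) K)"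
    "\<not> (\<exists>J. is_interval K J \<and> ord_iso (omega_times i) (Restr K J))"
    using assms unfolding good_form_def by blast
  obtain g where g: "iso_on g L (osum (omega_times i) K)" using K(2) unfolding ord_iso_iff by blast
  show thesis by (rule that[OF K(1) g K(3)])
qed

lemma gf_nonempty:
  fixes L :: "'a rel"
  assumes "good_form i L" "i \<ge> 1"
  shows "\<exists>a. a \<in> Field L"
proof -
  obtain K :: "'a rel" and g where g: "iso_on g L (osum (omega_times i) K)"
    using gf_obtain[OF assms(1)] by metis
  have "(0, 0) \<in> Field (omega_times i)" using assms(2) unfolding Field_omega by simp
  then have "Inl (0, 0) \<in> Field (osum (omega_times i) K)" by (simp only: Field_osum_L)
  then obtain a where "a \<in> Field L" using iso_on_surj[OF g] by blast
  then show ?thesis by blast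
qed

lemma wf_interval_block:
  assumes refl: "\<forall>q. refl_on (Field (L (c q))) (L (c q))"
    and ne: "\<forall>q. \<exists>a. a \<in> Field (L (c q))"
    and J: "is_interval (shuf_col c L) J" and iso: "ord_iso (omega_times m) (Restr (shuf_col c L) J)"
    and xa: "(x, a) \<in> J" and yb: "(y, b) \<in> J"
  shows "x = y"
proof (rule ccontr)
  assume "x \<noteq> y"
  let ?r = "shuf_col c L"
  have FS: "(z, d) \<in> Field ?r \<longleftrightarrow> d \<in> Field (L (c z))" for z d using Field_shuf_mem[of L c, OF refl] .
  have JF: "J \<subseteq> Field ?r" using J unfolding is_interval_def by blast
  have FJ: "Field (Restr ?r J) = J"
  proof (rule Field_Restr_refl[OF _ JF])
    show "refl_on (Field ?r) ?r" unfolding refl_on_def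
    proof
      fix p assume "p \<in> Field ?r"
      then have "snd p \<in> Field (L (c (fst p)))" using FS by (cases p) auto
      then show "(p, p) \<in> ?r" using refl unfolding refl_on_def by (cases p) (simp add: shuf_mem)
    qed
  qed
  have main: "False" if lt: "u < v" and u: "(u, a') \<in> J" and v: "(v, b') \<in> J" for u v a' b'
  proof -
    define z where "z n = u + (v - u) / (of_nat n + 2)" for n :: nat
    define e where "e n = (SOME d. d \<in> Field (L (c (z n))))" for n
    define f where "f n = (z n, e n)" for n
    have e: "e n \<in> Field (L (c (z n)))" for n unfolding e_def using ne by (meson someI_ex)
    have zlo: "u < z n" for n unfolding z_def using lt by (simp add: field_simps)
    have zhi: "z n < v" for n
    proof -
      have "(v - u) / (of_nat n + 2) < (v - u) / 1" using lt by (intro divide_strict_left_mono) auto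
      then show ?thesis unfolding z_def by simp
    qed
    have zdec: "z (Suc n) < z n" for n
    proof -
      have "(v - u) / (of_nat (Suc n) + 2) < (v - u) / (of_nat n + 2)"
        using lt by (intro divide_strict_left_mono) auto
      then show ?thesis unfolding z_def by simp
    qed
    have a': "a' \<in> Field (L (c u))" "b' \<in> Field (L (c v))" using u v JF FS by auto
    have fJ: "f n \<in> J" for n
    proof -
      have "((u, a'), f n) \<in> ?r" unfolding f_def using a' e zlo by (simp add: shuf_mem)
      moreover have "(f n, (v, b')) \<in> ?r" unfolding f_def using a' e zhi by (simp add: shuf_mem)
      ultimately show ?thesis using J u v unfolding is_interval_def by blast
    qed
    have "desc (Restr ?r J) J f"
      unfolding desc_def
    proof
      fix n
      have "(f (Suc n), f n) \<in> ?r" unfolding f_def using e zdec by (simp add: shuf_mem)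
      moreover have "f (Suc n) \<noteq> f n" unfolding f_def using zdec by (metis less_irrefl prod.inject)
      ultimately show "f n \<in> J \<and> (f (Suc n), f n) \<in> Restr ?r J \<and> f (Suc n) \<noteq> f n" using fJ by blast
    qed
    moreover have "ord_iso (Restr ?r J) (omega_times m)" using iso by (rule ord_iso_sym)
    then obtain h where h: "iso_on h (Restr ?r J) (omega_times m)"
      unfolding ord_iso_iff by blast
    moreover have JJ: "J \<subseteq> Field (Restr ?r J)" using FJ by simp
    ultimately have "desc (omega_times m) (h ` J) (h \<circ> f)" using desc_iso[OF h JJ] by blast
    then show False using omega_no_desc by blast
  qed
  show False
  proof (cases "x < y")
    case True then show False using main[OF True xa yb] by blast
  next
    case False then have "y < x" using \<open>x \<noteq> y\<close> by (simp add: neq_iff)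
    then show False using main[OF _ yb xa] by blast
  qed
qed



lemma dec_seq:
  fixes u v :: rat assumes lt: "u < v"
  shows "\<exists>z::nat \<Rightarrow> rat. \<forall>n. u < z n \<and> z n < v \<and> z (Suc n) < z n"
proof -
  define z where "z n = u + (v - u) / (of_nat n + 2)" for n :: nat
  have zlo: "u < z n" for n unfolding z_def using lt by (simp add: field_simps)
  have zhi: "z n < v" for n
  proof -
    have "(v - u) / (of_nat n + 2) < (v - u) / 1" using lt by (intro divide_strict_left_mono) auto
    then show ?thesis unfolding z_def by simp
  qed
  have zdec: "z (Suc n) < z n" for n
  proof -
    have "(v - u) / (of_nat (Suc n) + 2) < (v - u) / (of_nat n + 2)"
      using lt by (intro divide_strict_left_mono) auto
    then show ?thesis unfolding z_def by simp
  qed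
  show ?thesis using zlo zhi zdec by blast
qed

definition starter :: "nat \<Rightarrow> 'a rel \<Rightarrow> 'a \<Rightarrow> bool" where
  "starter i r s \<longleftrightarrow> (\<exists>J. is_interval r J \<and> s \<in> J \<and> (\<forall>t\<in>J. (s, t) \<in> r) \<and> ord_iso (omega_times i) (Restr r J))"

definition btw :: "'a rel \<Rightarrow> 'a \<Rightarrow> 'a \<Rightarrow> 'a \<Rightarrow> bool" where
  "btw r u v s \<longleftrightarrow> ((u, s) \<in> r \<and> (s, v) \<in> r) \<or> ((v, s) \<in> r \<and> (s, u) \<in> r)"

definition sameblk :: "nat \<Rightarrow> 'a rel \<Rightarrow> 'a \<Rightarrow> 'a \<Rightarrow> bool" where
  "sameblk i r u v \<longleftrightarrow> \<not> (\<exists>f. desc r {s. starter i r s \<and> btw r u v s} f)"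

lemma starter_Field: "starter i r s \<Longrightarrow> s \<in> Field r"
  unfolding starter_def is_interval_def by blast

lemma desc_mono: "desc r A f \<Longrightarrow> A \<subseteq> B \<Longrightarrow> desc r B f"
  unfolding desc_def by blast

lemma starter_iso:
  assumes F: "iso_on F r r'" and rr: "refl_on (Field r) r" and rr': "refl_on (Field r') r'"
    and st: "starter i r s"
  shows "starter i r' (F s)"
proof -
  obtain J where J: "is_interval r J" "s \<in> J" "\<forall>t\<in>J. (s, t) \<in> r" "ord_iso (omega_times i) (Restr r J)"
    using st unfolding starter_def by blast
  have JF: "J \<subseteq> Field r" using J(1) unfolding is_interval_def by blast
  have 1: "is_interval r' (F ` J)" using iso_on_interval[OF F J(1)] .
  have 2: "F s \<in> F ` J" using J(2) by blast
  have 3: "\<forall>t'\<in>F ` J. (F s, t') \<in> r'"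
  proof
    fix t' assume "t' \<in> F ` J"
    then obtain t where t: "t \<in> J" "t' = F t" by blast
    then have "(s, t) \<in> r" using J(3) by blast
    then show "(F s, t') \<in> r'" using iso_on_rel[OF F, of s t] t J(2) JF by blast
  qed
  have "iso_on F (Restr r J) (Restr r' (F ` J))" using iso_on_Restr[OF F rr rr' JF] .
  then have "ord_iso (Restr r J) (Restr r' (F ` J))" unfolding ord_iso_iff by blast
  then have 4: "ord_iso (omega_times i) (Restr r' (F ` J))" using J(4) ord_iso_trans by blast
  show ?thesis unfolding starter_def using 1 2 3 4 by blast
qed

lemma not_sameblk_iso:
  assumes F: "iso_on F r r'" and rr: "refl_on (Field r) r" and rr': "refl_on (Field r') r'"
    and u: "u \<in> Field r" and v: "v \<in> Field r" and ns: "\<not> sameblk i r u v"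
  shows "\<not> sameblk i r' (F u) (F v)"
proof -
  let ?S = "{s. starter i r s \<and> btw r u v s}"
  let ?S' = "{s. starter i r' s \<and> btw r' (F u) (F v) s}"
  obtain f where f: "desc r ?S f" using ns unfolding sameblk_def by blast
  have SF: "?S \<subseteq> Field r" using starter_Field[of i r] by blast
  have d: "desc r' (F ` ?S) (F \<circ> f)" using desc_iso[OF F SF f] .
  have "F ` ?S \<subseteq> ?S'"
  proof
    fix w assume "w \<in> F ` ?S"
    then obtain s where s: "starter i r s" "btw r u v s" "w = F s" by blast
    have sF: "s \<in> Field r" using starter_Field[OF s(1)] .
    have "starter i r' (F s)" using starter_iso[OF F rr rr' s(1)] .
    moreover have "btw r' (F u) (F v) (F s)"
      using s(2) iso_on_rel[OF F u sF] iso_on_rel[OF F sF v] iso_on_rel[OF F v sF] iso_on_rel[OF F sF u]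
      unfolding btw_def by blast
    ultimately show "w \<in> ?S'" using s(3) by blast
  qed
  then have "desc r' ?S' (F \<circ> f)" using desc_mono d by blast
  then show ?thesis unfolding sameblk_def by blast
qed

lemma sameblk_iso:
  assumes F: "iso_on F r r'" and rr: "refl_on (Field r) r" and rr': "refl_on (Field r') r'"
    and u: "u \<in> Field r" and v: "v \<in> Field r"
  shows "sameblk i r u v \<longleftrightarrow> sameblk i r' (F u) (F v)"
proof
  assume s: "sameblk i r u v"
  show "sameblk i r' (F u) (F v)"
  proof (rule ccontr)
    assume ns: "\<not> sameblk i r' (F u) (F v)"
    let ?G = "inv_into (Field r) F"
    have G: "iso_on ?G r' r" using iso_on_inv[OF F] .
    have Fu: "F u \<in> Field r'" "F v \<in> Field r'" using iso_on_mem[OF F] u v by blast+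
    have inj: "inj_on F (Field r)" using F unfolding iso_on_def bij_betw_def by blast
    have "?G (F u) = u" "?G (F v) = v" using inv_into_f_f[OF inj] u v by blast+
    then show False using not_sameblk_iso[OF G rr' rr Fu ns] s by simp
  qed
next
  assume s: "sameblk i r' (F u) (F v)"
  show "sameblk i r u v" using not_sameblk_iso[OF F rr rr' u v] s by blast
qed



lemma shuf_refl:
  assumes lin: "\<forall>q. Linear_order (L (c q))"
  shows "refl_on (Field (shuf_col c L)) (shuf_col c L)"
  using refl_of_lin[OF Linear_shuf[of L c, OF lin]] .

lemma first_starter:
  fixes L :: "'i \<Rightarrow> 'a rel" and c :: "rat \<Rightarrow> 'i" and K :: "'b rel"
  assumes lin: "\<forall>q. Linear_order (L (c q))" and i1: "1 \<le> i"
    and g: "iso_on g (L (c q)) (osum (omega_times i) K)"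
  shows "starter i (shuf_col c L) (q, inv_into (Field (L (c q))) g (Inl (0, 0)))"
proof -
  let ?r = "shuf_col c L"
  let ?Lq = "L (c q)"
  let ?M = "osum (omega_times i) K"
  let ?gi = "inv_into (Field ?Lq) g"
  have refl: "\<forall>q. refl_on (Field (L (c q))) (L (c q))" using lin refl_of_lin by blast
  have rr: "refl_on (Field ?r) ?r" using shuf_refl[of L c, OF lin] .
  have FS: "(z, d) \<in> Field ?r \<longleftrightarrow> d \<in> Field (L (c z))" for z d using Field_shuf_mem[of L c, OF refl] .
  have gi: "iso_on ?gi ?M ?Lq" using iso_on_inv[OF g] .
  have inj: "inj_on g (Field ?Lq)" using g unfolding iso_on_def bij_betw_def by blast
  have img: "g ` Field ?Lq = Field ?M" using g unfolding iso_on_def bij_betw_def by blast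
  have gim: "?gi (Inl \<alpha>) \<in> Field ?Lq" "g (?gi (Inl \<alpha>)) = Inl \<alpha>" if "\<alpha> \<in> Field (omega_times i)" for \<alpha>
  proof -
    have a: "Inl \<alpha> \<in> Field ?M" using that by simp
    show "?gi (Inl \<alpha>) \<in> Field ?Lq" using iso_on_mem[OF gi a] .
    show "g (?gi (Inl \<alpha>)) = Inl \<alpha>" using f_inv_into_f[of "Inl \<alpha>" g "Field ?Lq"] a img by blast
  qed
  define A where "A = {b \<in> Field ?Lq. \<exists>\<alpha>. g b = Inl \<alpha>}"
  define J where "J = {p. fst p = q \<and> snd p \<in> A}"
  define h where "h \<alpha> = (q, ?gi (Inl \<alpha>))" for \<alpha>
  have Achar: "\<exists>\<alpha>\<in>Field (omega_times i). b = ?gi (Inl \<alpha>)" if hb: "b \<in> A" for b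
  proof -
    obtain \<alpha> where a: "b \<in> Field ?Lq" "g b = Inl \<alpha>" using hb unfolding A_def by blast
    have "Inl \<alpha> \<in> Field ?M" using iso_on_mem[OF g a(1)] a(2) by simp
    then have "\<alpha> \<in> Field (omega_times i)" by simp
    moreover have "?gi (g b) = b" using inv_into_f_f[OF inj a(1)] .
    ultimately show ?thesis using a(2) by metis
  qed
  have JF: "J \<subseteq> Field ?r" unfolding J_def A_def using FS by auto
  have FJ: "Field (Restr ?r J) = J" using Field_Restr_refl[OF rr JF] .
  have hJ: "h \<alpha> \<in> J" if "\<alpha> \<in> Field (omega_times i)" for \<alpha>
    unfolding h_def J_def A_def using gim[OF that] by simp
  have hrel: "(\<alpha>, \<beta>) \<in> omega_times i \<longleftrightarrow> (h \<alpha>, h \<beta>) \<in> ?r"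
    if "\<alpha> \<in> Field (omega_times i)" "\<beta> \<in> Field (omega_times i)" for \<alpha> \<beta>
  proof -
    have "(\<alpha>, \<beta>) \<in> omega_times i \<longleftrightarrow> (Inl \<alpha>, Inl \<beta>) \<in> ?M" by simp
    also have "\<dots> \<longleftrightarrow> (?gi (Inl \<alpha>), ?gi (Inl \<beta>)) \<in> ?Lq"
    proof -
      have m: "Inl \<alpha> \<in> Field ?M" "Inl \<beta> \<in> Field ?M" using that by simp_all
      show ?thesis using iso_on_rel[OF gi m] by blast
    qed
    also have "\<dots> \<longleftrightarrow> (h \<alpha>, h \<beta>) \<in> ?r" unfolding h_def using gim that by (simp add: shuf_mem)
    finally show ?thesis .
  qed
  have iso: "iso_on h (omega_times i) (Restr ?r J)"
    unfolding iso_on_def FJ bij_betw_def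
  proof (intro conjI ballI)
    show "inj_on h (Field (omega_times i))"
    proof (rule inj_onI)
      fix \<alpha> \<beta> assume ab: "\<alpha> \<in> Field (omega_times i)" "\<beta> \<in> Field (omega_times i)" "h \<alpha> = h \<beta>"
      then have "?gi (Inl \<alpha>) = ?gi (Inl \<beta>)" unfolding h_def by simp
      then have "g (?gi (Inl \<alpha>)) = g (?gi (Inl \<beta>))" by simp
      then show "\<alpha> = \<beta>" using gim ab by simp
    qed
    show "h ` Field (omega_times i) = J"
    proof
      show "h ` Field (omega_times i) \<subseteq> J" using hJ by blast
      show "J \<subseteq> h ` Field (omega_times i)"
      proof
        fix p assume "p \<in> J"
        then have p: "fst p = q" "snd p \<in> A" unfolding J_def by auto
        obtain \<alpha> where "\<alpha> \<in> Field (omega_times i)" "snd p = ?gi (Inl \<alpha>)" using Achar[OF p(2)] by blast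
        then show "p \<in> h ` Field (omega_times i)" unfolding h_def using p(1) by (metis image_eqI prod.collapse)
      qed
    qed
    fix \<alpha> \<beta> assume ab: "\<alpha> \<in> Field (omega_times i)" "\<beta> \<in> Field (omega_times i)"
    show "((\<alpha>, \<beta>) \<in> omega_times i) = ((h \<alpha>, h \<beta>) \<in> Restr ?r J)"
      using hrel[OF ab] hJ[OF ab(1)] hJ[OF ab(2)] by blast
  qed
  have intv: "is_interval ?r J"
    unfolding is_interval_def
  proof (intro conjI JF ballI allI impI)
    fix p1 p3 p2 assume p1: "p1 \<in> J" and p3: "p3 \<in> J" and b: "(p1, p2) \<in> ?r \<and> (p2, p3) \<in> ?r"
    obtain y b2 where p2: "p2 = (y, b2)" by (cases p2)
    obtain b1 where e1: "p1 = (q, b1)" "b1 \<in> A" using p1 unfolding J_def by (cases p1) auto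
    obtain b3 where e3: "p3 = (q, b3)" "b3 \<in> A" using p3 unfolding J_def by (cases p3) auto
    have r1: "q < y \<or> (q = y \<and> (b1, b2) \<in> ?Lq)" using b e1 p2 by (simp add: shuf_mem)
    have r2: "b2 \<in> Field (L (c y))" "y < q \<or> (y = q \<and> (b2, b3) \<in> L (c y))" using b e3 p2 by (simp_all add: shuf_mem)
    have yq: "y = q" using r1 r2(2) by auto
    have b2F: "b2 \<in> Field ?Lq" using r2(1) yq by simp
    have b3F: "b3 \<in> Field ?Lq" and "\<exists>\<alpha>. g b3 = Inl \<alpha>" using e3(2) unfolding A_def by blast+
    then obtain \<alpha>3 where a3: "g b3 = Inl \<alpha>3" by blast
    have "(b2, b3) \<in> ?Lq" using r2(2) yq by simp
    then have "(g b2, g b3) \<in> ?M" using iso_on_rel[OF g b2F b3F] by blast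
    then have "\<exists>\<alpha>. g b2 = Inl \<alpha>" using a3 by (cases "g b2") auto
    then have "b2 \<in> A" using b2F unfolding A_def by blast
    then show "p2 \<in> J" using p2 yq unfolding J_def by simp
  qed
  have z: "(0, 0) \<in> Field (omega_times i)" using i1 unfolding Field_omega by simp
  have sJ: "h (0, 0) \<in> J" using hJ[OF z] .
  have least: "\<forall>t\<in>J. (h (0, 0), t) \<in> ?r"
  proof
    fix t assume "t \<in> J"
    then obtain \<beta> where \<beta>: "\<beta> \<in> Field (omega_times i)" "t = h \<beta>"
      using iso unfolding iso_on_def bij_betw_def FJ by blast
    have "((0, 0), \<beta>) \<in> omega_times i" using \<beta>(1) z unfolding Field_omega by (cases \<beta>) (auto simp: omega_mem)
    then show "(h (0, 0), t) \<in> ?r" using hrel[OF z \<beta>(1)] \<beta>(2) by blast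
  qed
  have "ord_iso (omega_times i) (Restr ?r J)" using iso unfolding ord_iso_iff by blast
  then show ?thesis unfolding starter_def using intv sJ least unfolding h_def by blast
qed



lemma starter_Inl:
  fixes L :: "'i \<Rightarrow> 'a rel" and c :: "rat \<Rightarrow> 'i" and K :: "'b rel"
  assumes lin: "\<forall>q. Linear_order (L (c q))" and ne: "\<forall>q. \<exists>a. a \<in> Field (L (c q))"
    and g: "iso_on g (L (c q)) (osum (omega_times i) K)" and Klin: "Linear_order K"
    and Kgood: "\<not> (\<exists>J. is_interval K J \<and> ord_iso (omega_times i) (Restr K J))"
    and st: "starter i (shuf_col c L) (q, a)"
  shows "\<exists>\<alpha>. g a = Inl \<alpha>"
proof (rule ccontr)
  let ?r = "shuf_col c L"
  let ?Lq = "L (c q)"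
  let ?M = "osum (omega_times i) K"
  assume na: "\<nexists>\<alpha>. g a = Inl \<alpha>"
  then obtain k where gk: "g a = Inr k" by (cases "g a") auto
  obtain J where J: "is_interval ?r J" "(q, a) \<in> J" "\<forall>t\<in>J. ((q, a), t) \<in> ?r"
    "ord_iso (omega_times i) (Restr ?r J)" using st unfolding starter_def by blast
  have refl: "\<forall>q. refl_on (Field (L (c q))) (L (c q))" using lin refl_of_lin by blast
  have rr: "refl_on (Field ?r) ?r" using shuf_refl[of L c, OF lin] .
  have FS: "(z, d) \<in> Field ?r \<longleftrightarrow> d \<in> Field (L (c z))" for z d using Field_shuf_mem[of L c, OF refl] .
  have JF: "J \<subseteq> Field ?r" using J(1) unfolding is_interval_def by blast
  have FJ: "Field (Restr ?r J) = J" using Field_Restr_refl[OF rr JF] .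
  have fstJ: "fst t = q" if "t \<in> J" for t
  proof -
    obtain y b where t: "t = (y, b)" by (cases t)
    have "q = y" using wf_interval_block[of L c J i q a y b] refl ne J(1) J(4) J(2) that t by blast
    then show ?thesis using t by simp
  qed
  have tJ: "t = (q, snd t)" if "t \<in> J" for t using fstJ[OF that] by (metis prod.collapse)
  have sndF: "snd t \<in> Field ?Lq" if "t \<in> J" for t
    using JF that tJ[OF that] FS by (metis subsetD)
  have aF: "a \<in> Field ?Lq" using sndF[OF J(2)] by simp
  have isR: "\<exists>k'. g (snd t) = Inr k'" if ht: "t \<in> J" for t
  proof -
    have "((q, a), (q, snd t)) \<in> ?r" using J(3) ht tJ[OF ht] by metis
    then have "(a, snd t) \<in> ?Lq" by (simp add: shuf_mem)
    then have "(g a, g (snd t)) \<in> ?M" using iso_on_rel[OF g aF sndF[OF ht]] by blast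
    then show ?thesis using gk by (cases "g (snd t)") auto
  qed
  define h where "h t = projr (g (snd t))" for t :: "rat \<times> 'a"
  have gh: "g (snd t) = Inr (h t)" if "t \<in> J" for t
    using isR[OF that] unfolding h_def by auto
  define JK where "JK = h ` J"
  have JKF: "JK \<subseteq> Field K"
  proof
    fix k' assume "k' \<in> JK"
    then obtain t where t: "t \<in> J" "k' = h t" unfolding JK_def by blast
    have "g (snd t) \<in> Field ?M" using iso_on_mem[OF g sndF[OF t(1)]] .
    then show "k' \<in> Field K" using gh[OF t(1)] t(2) by simp
  qed
  have Krefl: "refl_on (Field K) K" using refl_of_lin[OF Klin] .
  have FJK: "Field (Restr K JK) = JK" using Field_Restr_refl[OF Krefl JKF] .
  have rel: "(t, t') \<in> ?r \<longleftrightarrow> (h t, h t') \<in> K" if "t \<in> J" "t' \<in> J" for t t'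
  proof -
    have "(t, t') \<in> ?r \<longleftrightarrow> ((q, snd t), (q, snd t')) \<in> ?r" using tJ that by metis
    also have "\<dots> \<longleftrightarrow> (snd t, snd t') \<in> ?Lq" using sndF that by (simp add: shuf_mem)
    also have "\<dots> \<longleftrightarrow> (g (snd t), g (snd t')) \<in> ?M" using iso_on_rel[OF g sndF sndF] that by blast
    also have "\<dots> \<longleftrightarrow> (h t, h t') \<in> K" using gh that by simp
    finally show ?thesis .
  qed
  have iso: "iso_on h (Restr ?r J) (Restr K JK)"
    unfolding iso_on_def FJ FJK bij_betw_def
  proof (intro conjI ballI)
    show "inj_on h J"
    proof (rule inj_onI)
      fix t t' assume tt: "t \<in> J" "t' \<in> J" "h t = h t'"
      then have "g (snd t) = g (snd t')" using gh by simp
      then have "snd t = snd t'" using iso_on_inj[OF g sndF sndF] tt by blast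
      then show "t = t'" using tJ tt by metis
    qed
    show "h ` J = JK" unfolding JK_def ..
    fix t t' assume "t \<in> J" "t' \<in> J"
    then show "((t, t') \<in> Restr ?r J) = ((h t, h t') \<in> Restr K JK)"
      using rel unfolding JK_def by blast
  qed
  have intv: "is_interval K JK"
    unfolding is_interval_def
  proof (intro conjI JKF ballI allI impI)
    fix k1 k3 k2 assume k1: "k1 \<in> JK" and k3: "k3 \<in> JK" and b: "(k1, k2) \<in> K \<and> (k2, k3) \<in> K"
    obtain t1 where t1: "t1 \<in> J" "k1 = h t1" using k1 unfolding JK_def by blast
    obtain t3 where t3: "t3 \<in> J" "k3 = h t3" using k3 unfolding JK_def by blast
    have "k2 \<in> Field K" using b by (blast intro: FieldI1)
    then have "Inr k2 \<in> Field ?M" by simp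
    then obtain b2 where b2: "b2 \<in> Field ?Lq" "g b2 = Inr k2" using iso_on_surj[OF g] by blast
    have "(g (snd t1), g b2) \<in> ?M" using gh[OF t1(1)] b2(2) b t1(2) by simp
    then have "(snd t1, b2) \<in> ?Lq" using iso_on_rel[OF g sndF[OF t1(1)] b2(1)] by blast
    then have 1: "(t1, (q, b2)) \<in> ?r" using tJ[OF t1(1)] sndF[OF t1(1)] b2(1) by (metis shuf_mem)
    have "(g b2, g (snd t3)) \<in> ?M" using gh[OF t3(1)] b2(2) b t3(2) by simp
    then have "(b2, snd t3) \<in> ?Lq" using iso_on_rel[OF g b2(1) sndF[OF t3(1)]] by blast
    then have 2: "((q, b2), t3) \<in> ?r" using tJ[OF t3(1)] sndF[OF t3(1)] b2(1) by (metis shuf_mem)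
    have "(q, b2) \<in> J" using J(1) t1(1) t3(1) 1 2 unfolding is_interval_def by blast
    moreover have "h (q, b2) = k2" unfolding h_def using b2(2) by simp
    ultimately show "k2 \<in> JK" unfolding JK_def by blast
  qed
  have "ord_iso (Restr ?r J) (Restr K JK)" using iso unfolding ord_iso_iff by blast
  then have "ord_iso (omega_times i) (Restr K JK)" using J(4) ord_iso_trans by blast
  then show False using Kgood intv by blast
qed



lemma sameblk_sym: "sameblk i r u v \<longleftrightarrow> sameblk i r v u"
proof -
  have "btw r u v = btw r v u" unfolding btw_def by (intro ext) blast
  then show ?thesis unfolding sameblk_def by simp
qed

lemma block_char:
  fixes L :: "'i \<Rightarrow> 'a rel" and c :: "rat \<Rightarrow> 'i"
  assumes lin: "\<forall>q. Linear_order (L (c q))" and gf: "\<forall>q. good_form i (L (c q))" and i1: "1 \<le> i"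
    and u: "(x, a) \<in> Field (shuf_col c L)" and v: "(y, b) \<in> Field (shuf_col c L)"
  shows "sameblk i (shuf_col c L) (x, a) (y, b) \<longleftrightarrow> x = y"
proof -
  let ?r = "shuf_col c L"
  have refl: "\<forall>q. refl_on (Field (L (c q))) (L (c q))" using lin refl_of_lin by blast
  have FS: "(z, d) \<in> Field ?r \<longleftrightarrow> d \<in> Field (L (c z))" for z d using Field_shuf_mem[of L c, OF refl] .
  have ne: "\<forall>q. \<exists>a. a \<in> Field (L (c q))" using gf_nonempty gf i1 by blast
  have aF: "a \<in> Field (L (c x))" "b \<in> Field (L (c y))" using u v FS by auto
  have hasst: "\<exists>d. starter i ?r (q, d)" for q
  proof -
    obtain K :: "'a rel" and g where g: "iso_on g (L (c q)) (osum (omega_times i) K)"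
      using gf_obtain[of i "L (c q)"] gf by metis
    show ?thesis using first_starter[of L c, OF lin i1 g] by blast
  qed
  define s0 where "s0 q = (SOME d. starter i ?r (q, d))" for q
  have s0: "starter i ?r (q, s0 q)" for q unfolding s0_def using hasst someI_ex by metis
  have s0F: "s0 q \<in> Field (L (c q))" for q using starter_Field[OF s0[of q]] FS by blast
  have diff: "\<not> sameblk i ?r (x', a') (y', b')"
    if lt: "x' < y'" and a': "a' \<in> Field (L (c x'))" and b': "b' \<in> Field (L (c y'))" for x' y' a' b'
  proof -
    obtain z :: "nat \<Rightarrow> rat" where z: "\<forall>n. x' < z n \<and> z n < y' \<and> z (Suc n) < z n"
      using dec_seq[OF lt] by blast
    define f where "f n = (z n, s0 (z n))" for n
    have "desc ?r {s. starter i ?r s \<and> btw ?r (x', a') (y', b') s} f"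
      unfolding desc_def
    proof
      fix n
      have "starter i ?r (f n)" unfolding f_def using s0 .
      moreover have "btw ?r (x', a') (y', b') (f n)"
        unfolding btw_def f_def using z a' b' s0F by (simp add: shuf_mem)
      moreover have "(f (Suc n), f n) \<in> ?r" unfolding f_def using z s0F by (simp add: shuf_mem)
      moreover have "f (Suc n) \<noteq> f n" unfolding f_def using z by (metis less_irrefl prod.inject)
      ultimately show "f n \<in> {s. starter i ?r s \<and> btw ?r (x', a') (y', b') s} \<and> (f (Suc n), f n) \<in> ?r \<and> f (Suc n) \<noteq> f n"
        by blast
    qed
    then show ?thesis unfolding sameblk_def by blast
  qed
  show ?thesis
  proof
    assume s: "sameblk i ?r (x, a) (y, b)"
    show "x = y"
    proof (rule ccontr)
      assume "x \<noteq> y"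
      then have "x < y \<or> y < x" by (simp add: neq_iff)
      then show False
      proof
        assume "x < y" then show False using diff[OF _ aF] s by blast
      next
        assume "y < x" then show False using diff[OF _ aF(2) aF(1)] s sameblk_sym by metis
      qed
    qed
  next
    assume xy: "x = y"
    show "sameblk i ?r (x, a) (y, b)"
    proof (rule ccontr)
      assume "\<not> sameblk i ?r (x, a) (y, b)"
      then obtain f where f: "desc ?r {s. starter i ?r s \<and> btw ?r (x, a) (y, b) s} f"
        unfolding sameblk_def by blast
      obtain K :: "'a rel" and g where g: "iso_on g (L (c x)) (osum (omega_times i) K)"
        and Klin: "Linear_order K" and Kg: "\<not> (\<exists>J. is_interval K J \<and> ord_iso (omega_times i) (Restr K J))"
        using gf_obtain[of i "L (c x)"] gf by metis
      have fx: "f n = (x, snd (f n))" for n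
      proof -
        have "btw ?r (x, a) (x, b) (f n)" using f xy unfolding desc_def by blast
        then have "fst (f n) = x" unfolding btw_def by (cases "f n") (auto simp: shuf_mem)
        then show ?thesis by (metis prod.collapse)
      qed
      have fF: "snd (f n) \<in> Field (L (c x))" for n
      proof -
        have "starter i ?r (f n)" using f unfolding desc_def by blast
        then have "f n \<in> Field ?r" by (rule starter_Field)
        then show ?thesis using fx[of n] FS by metis
      qed
      have "\<exists>\<alpha>. g (snd (f n)) = Inl \<alpha>" for n
      proof -
        have "starter i ?r (f n)" using f unfolding desc_def by blast
        then have "starter i ?r (x, snd (f n))" using fx by metis
        then show ?thesis using starter_Inl[of L c, OF lin ne g Klin Kg] by blast
      qed
      then obtain p where p: "\<And>n. g (snd (f n)) = Inl (p n)" by metis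
      have "desc (omega_times i) UNIV p"
        unfolding desc_def
      proof
        fix n
        have h1: "(f (Suc n), f n) \<in> ?r" "f (Suc n) \<noteq> f n" using f unfolding desc_def by blast+
        have "((x, snd (f (Suc n))), (x, snd (f n))) \<in> ?r" using h1(1) fx[of n] fx[of "Suc n"] by metis
        then have 1: "(snd (f (Suc n)), snd (f n)) \<in> L (c x)" by (simp add: shuf_mem)
        have 2: "snd (f (Suc n)) \<noteq> snd (f n)" using h1(2) fx[of n] fx[of "Suc n"] by metis
        note 1 = 1 2
        have "(g (snd (f (Suc n))), g (snd (f n))) \<in> osum (omega_times i) K"
          using iso_on_rel[OF g fF fF] 1(1) by blast
        then have "(p (Suc n), p n) \<in> omega_times i" using p by simp
        moreover have "g (snd (f (Suc n))) \<noteq> g (snd (f n))" using iso_on_inj[OF g fF fF] 1(2) by blast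
        then have "p (Suc n) \<noteq> p n" using p by metis
        ultimately show "p n \<in> UNIV \<and> (p (Suc n), p n) \<in> omega_times i \<and> p (Suc n) \<noteq> p n" by blast
      qed
      then show False using omega_no_desc by blast
    qed
  qed
qed



lemma block_emb:
  fixes L :: "'i \<Rightarrow> 'a rel" and c :: "rat \<Rightarrow> 'i"
  assumes lin: "\<forall>q. Linear_order (L (c q))"
  shows "iso_on (\<lambda>a. (x, a)) (L (c x)) (Restr (shuf_col c L) {p. fst p = x \<and> snd p \<in> Field (L (c x))})"
proof -
  let ?r = "shuf_col c L"
  let ?B = "{p. fst p = x \<and> snd p \<in> Field (L (c x))}"
  have refl: "\<forall>q. refl_on (Field (L (c q))) (L (c q))" using lin refl_of_lin by blast
  have rr: "refl_on (Field ?r) ?r" using shuf_refl[of L c, OF lin] .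
  have FS: "(z, d) \<in> Field ?r \<longleftrightarrow> d \<in> Field (L (c z))" for z d using Field_shuf_mem[of L c, OF refl] .
  have BF: "?B \<subseteq> Field ?r" using FS by auto
  have FB: "Field (Restr ?r ?B) = ?B" using Field_Restr_refl[OF rr BF] .
  show ?thesis unfolding iso_on_def FB bij_betw_def
  proof (intro conjI ballI)
    show "inj_on (\<lambda>a. (x, a)) (Field (L (c x)))" by (rule inj_onI) simp
    show "(\<lambda>a. (x, a)) ` Field (L (c x)) = ?B"
    proof
      show "(\<lambda>a. (x, a)) ` Field (L (c x)) \<subseteq> ?B" by auto
      show "?B \<subseteq> (\<lambda>a. (x, a)) ` Field (L (c x))"
      proof
        fix p assume "p \<in> ?B"
        then show "p \<in> (\<lambda>a. (x, a)) ` Field (L (c x))" by (cases p) auto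
      qed
    qed
    fix a b assume "a \<in> Field (L (c x))" "b \<in> Field (L (c x))"
    then show "((a, b) \<in> L (c x)) = (((x, a), x, b) \<in> Restr ?r ?B)" by (simp add: shuf_mem)
  qed
qed

lemma block_map:
  fixes L1 :: "'i \<Rightarrow> 'a rel" and c1 :: "rat \<Rightarrow> 'i" and L2 :: "'j \<Rightarrow> 'b rel" and c2 :: "rat \<Rightarrow> 'j"
  assumes lin1: "\<forall>q. Linear_order (L1 (c1 q))" and gf1: "\<forall>q. good_form i (L1 (c1 q))"
    and lin2: "\<forall>q. Linear_order (L2 (c2 q))" and gf2: "\<forall>q. good_form i (L2 (c2 q))" and i1: "1 \<le> i"
    and F: "iso_on F (shuf_col c1 L1) (shuf_col c2 L2)"
  shows "\<exists>y. ord_iso (L1 (c1 x)) (L2 (c2 y))"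
proof -
  let ?r1 = "shuf_col c1 L1" and ?r2 = "shuf_col c2 L2"
  have refl1: "\<forall>q. refl_on (Field (L1 (c1 q))) (L1 (c1 q))" using lin1 refl_of_lin by blast
  have refl2: "\<forall>q. refl_on (Field (L2 (c2 q))) (L2 (c2 q))" using lin2 refl_of_lin by blast
  have rr1: "refl_on (Field ?r1) ?r1" using shuf_refl[of L1 c1, OF lin1] .
  have rr2: "refl_on (Field ?r2) ?r2" using shuf_refl[of L2 c2, OF lin2] .
  have FS1: "(z, d) \<in> Field ?r1 \<longleftrightarrow> d \<in> Field (L1 (c1 z))" for z d using Field_shuf_mem[of L1 c1, OF refl1] .
  have FS2: "(z, d) \<in> Field ?r2 \<longleftrightarrow> d \<in> Field (L2 (c2 z))" for z d using Field_shuf_mem[of L2 c2, OF refl2] .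
  obtain a0 where a0: "a0 \<in> Field (L1 (c1 x))" using gf_nonempty gf1 i1 by blast
  let ?u0 = "(x, a0)"
  have u0: "?u0 \<in> Field ?r1" using FS1 a0 by simp
  define y where "y = fst (F ?u0)"
  let ?B1 = "{p. fst p = x \<and> snd p \<in> Field (L1 (c1 x))}"
  let ?B2 = "{p. fst p = y \<and> snd p \<in> Field (L2 (c2 y))}"
  have Fu0: "F ?u0 \<in> Field ?r2" using iso_on_mem[OF F u0] .
  have Fu0e: "F ?u0 = (y, snd (F ?u0))" unfolding y_def by simp
  have same1: "sameblk i ?r1 ?u0 v \<longleftrightarrow> fst v = x" if "v \<in> Field ?r1" for v
    using block_char[of L1 c1 i x a0 "fst v" "snd v", OF lin1 gf1 i1 u0] that by (cases v) auto
  have same2: "sameblk i ?r2 (F ?u0) w \<longleftrightarrow> fst w = y" if "w \<in> Field ?r2" for w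
    using block_char[of L2 c2 i y "snd (F ?u0)" "fst w" "snd w", OF lin2 gf2 i1] Fu0 Fu0e that
    by (cases w) auto
  have B: "F ` ?B1 = ?B2"
  proof
    show "F ` ?B1 \<subseteq> ?B2"
    proof
      fix w assume "w \<in> F ` ?B1"
      then obtain v where v: "v \<in> ?B1" "w = F v" by blast
      have vF: "v \<in> Field ?r1" using v(1) FS1 by (cases v) auto
      have "sameblk i ?r1 ?u0 v" using same1[OF vF] v(1) by simp
      then have "sameblk i ?r2 (F ?u0) (F v)" using sameblk_iso[OF F rr1 rr2 u0 vF] by blast
      moreover have "F v \<in> Field ?r2" using iso_on_mem[OF F vF] .
      ultimately have "fst (F v) = y" using same2 by blast
      moreover have "snd (F v) \<in> Field (L2 (c2 (fst (F v))))" using \<open>F v \<in> Field ?r2\<close> FS2 by (cases "F v") auto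
      ultimately show "w \<in> ?B2" using v(2) by simp
    qed
    show "?B2 \<subseteq> F ` ?B1"
    proof
      fix w assume w: "w \<in> ?B2"
      have wF: "w \<in> Field ?r2" using w FS2 by (cases w) auto
      obtain v where v: "v \<in> Field ?r1" "F v = w" using iso_on_surj[OF F wF] by blast
      have "sameblk i ?r2 (F ?u0) (F v)" using same2[OF wF] w v(2) by simp
      then have "sameblk i ?r1 ?u0 v" using sameblk_iso[OF F rr1 rr2 u0 v(1)] by blast
      then have "fst v = x" using same1[OF v(1)] by blast
      moreover have "snd v \<in> Field (L1 (c1 (fst v)))" using v(1) FS1 by (cases v) auto
      ultimately have "v \<in> ?B1" by simp
      then show "w \<in> F ` ?B1" using v(2) by blast
    qed
  qed
  have B1F: "?B1 \<subseteq> Field ?r1" using FS1 by auto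
  have "iso_on F (Restr ?r1 ?B1) (Restr ?r2 (F ` ?B1))" using iso_on_Restr[OF F rr1 rr2 B1F] .
  then have 1: "ord_iso (Restr ?r1 ?B1) (Restr ?r2 ?B2)" unfolding B ord_iso_iff by blast
  have 2: "ord_iso (L1 (c1 x)) (Restr ?r1 ?B1)" using block_emb[of L1 c1 x, OF lin1] unfolding ord_iso_iff by blast
  have 3: "ord_iso (L2 (c2 y)) (Restr ?r2 ?B2)" using block_emb[of L2 c2 y, OF lin2] unfolding ord_iso_iff by blast
  have "ord_iso (L1 (c1 x)) (L2 (c2 y))" using ord_iso_trans[OF ord_iso_trans[OF 2 1] ord_iso_sym[OF 3]] .
  then show ?thesis by blast
qed



abbreviation lexR :: "((nat \<times> nat) \<times> (nat \<times> nat)) set" where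
  "lexR \<equiv> lex_prod less_than less_than"

lemma lexR_iff: "((k, n), (k', n')) \<in> lexR \<longleftrightarrow> k < k' \<or> (k = k' \<and> n < n')"
  by simp

lemma no_emb:
  assumes n: "n < m"
    and into: "\<forall>\<alpha>\<in>Field (omega_times m). \<phi> \<alpha> \<in> Field (omega_times n)"
    and mono: "\<forall>\<alpha>\<in>Field (omega_times m). \<forall>\<beta>\<in>Field (omega_times m). (\<alpha>, \<beta>) \<in> lexR \<longrightarrow> (\<phi> \<alpha>, \<phi> \<beta>) \<in> lexR"
  shows False
proof -
  have w: "wf lexR" by (intro wf_lex_prod wf_less_than)
  have claim: "\<alpha> \<in> Field (omega_times m) \<longrightarrow> (\<phi> \<alpha>, \<alpha>) \<notin> lexR" for \<alpha>
  proof (induction \<alpha> rule: wf_induct_rule[OF w])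
    case (1 \<alpha>)
    show ?case
    proof (intro impI notI)
      assume a: "\<alpha> \<in> Field (omega_times m)" and lt: "(\<phi> \<alpha>, \<alpha>) \<in> lexR"
      have "\<phi> \<alpha> \<in> Field (omega_times n)" using into a by blast
      then have b: "\<phi> \<alpha> \<in> Field (omega_times m)" using n unfolding Field_omega by simp
      have "(\<phi> (\<phi> \<alpha>), \<phi> \<alpha>) \<notin> lexR" using 1 lt b by blast
      moreover have "(\<phi> (\<phi> \<alpha>), \<phi> \<alpha>) \<in> lexR" using mono a b lt by blast
      ultimately show False by blast
    qed
  qed
  have a: "(n, 0) \<in> Field (omega_times m)" using n unfolding Field_omega by simp
  have "\<phi> (n, 0) \<in> Field (omega_times n)" using into a by blast
  then have "fst (\<phi> (n, 0)) < n" unfolding Field_omega by simp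
  then have "(\<phi> (n, 0), (n, 0)) \<in> lexR" by (cases "\<phi> (n, 0)") simp
  then show False using claim a by blast
qed

lemma omega_lexR:
  "\<alpha> \<in> Field (omega_times m) \<Longrightarrow> \<beta> \<in> Field (omega_times m) \<Longrightarrow>
    (\<alpha>, \<beta>) \<in> lexR \<longleftrightarrow> (\<alpha>, \<beta>) \<in> omega_times m \<and> \<alpha> \<noteq> \<beta>"
  unfolding Field_omega by (cases \<alpha>; cases \<beta>) (auto simp: omega_mem)

lemma iso_lexR:
  assumes H: "iso_on H (omega_times m) s" and \<phi>: "\<forall>\<alpha>\<in>Field (omega_times m). \<phi> \<alpha> \<in> Field (omega_times n)"
    and rel: "\<forall>\<alpha>\<in>Field (omega_times m). \<forall>\<beta>\<in>Field (omega_times m). (H \<alpha>, H \<beta>) \<in> s \<longrightarrow> (\<phi> \<alpha>, \<phi> \<beta>) \<in> omega_times n"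
    and inj: "inj_on \<phi> (Field (omega_times m))"
  shows "\<forall>\<alpha>\<in>Field (omega_times m). \<forall>\<beta>\<in>Field (omega_times m). (\<alpha>, \<beta>) \<in> lexR \<longrightarrow> (\<phi> \<alpha>, \<phi> \<beta>) \<in> lexR"
proof (intro ballI impI)
  fix \<alpha> \<beta> assume a: "\<alpha> \<in> Field (omega_times m)" "\<beta> \<in> Field (omega_times m)" "(\<alpha>, \<beta>) \<in> lexR"
  then have "(\<alpha>, \<beta>) \<in> omega_times m" "\<alpha> \<noteq> \<beta>" using omega_lexR by blast+
  then have "(H \<alpha>, H \<beta>) \<in> s" using iso_on_rel[OF H a(1) a(2)] by blast
  then have "(\<phi> \<alpha>, \<phi> \<beta>) \<in> omega_times n" using rel a by blast
  moreover have "\<phi> \<alpha> \<noteq> \<phi> \<beta>" using inj a \<open>\<alpha> \<noteq> \<beta>\<close> unfolding inj_on_def by blast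
  ultimately show "(\<phi> \<alpha>, \<phi> \<beta>) \<in> lexR" using omega_lexR \<phi> a by blast
qed

lemma interval_sub:
  assumes "refl_on (Field r) r" "is_interval r J" "J \<subseteq> B" "B \<subseteq> Field r"
  shows "is_interval (Restr r B) J"
proof -
  have FB: "Field (Restr r B) = B" using Field_Restr_refl assms(1,4) by blast
  show ?thesis unfolding is_interval_def FB
  proof (intro conjI assms(3) ballI allI impI)
    fix x z y assume "x \<in> J" "z \<in> J" "(x, y) \<in> Restr r B \<and> (y, z) \<in> Restr r B"
    then show "y \<in> J" using assms(2) unfolding is_interval_def by blast
  qed
qed

lemma interval_Restr_trans:
  assumes "is_interval r J" "is_interval (Restr r J) S"
  shows "is_interval r S"
  unfolding is_interval_def
proof (intro conjI ballI allI impI)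
  have "S \<subseteq> Field (Restr r J)" using assms(2) unfolding is_interval_def by blast
  moreover have "Field (Restr r J) \<subseteq> J" unfolding Field_def by blast
  ultimately have SJ: "S \<subseteq> J" by blast
  then show "S \<subseteq> Field r" using assms(1) unfolding is_interval_def by blast
  fix x z y assume xz: "x \<in> S" "z \<in> S" and y: "(x, y) \<in> r \<and> (y, z) \<in> r"
  then have "y \<in> J" using assms(1) SJ unfolding is_interval_def by blast
  then have "(x, y) \<in> Restr r J \<and> (y, z) \<in> Restr r J" using y xz SJ by blast
  then show "y \<in> S" using assms(2) xz unfolding is_interval_def by blast
qed

lemma Restr_Restr: "S \<subseteq> J \<Longrightarrow> Restr (Restr r J) S = Restr r S" by blast

lemma decomp:
  fixes L :: "'a rel" and R :: "'b rel"
  assumes lin: "Linear_order L" and AF: "A \<subseteq> Field L"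
    and down: "\<forall>a\<in>A. \<forall>b. (b, a) \<in> L \<longrightarrow> b \<in> A"
    and \<theta>: "iso_on \<theta> R (Restr L A)"
  shows "ord_iso L (osum R (Restr L (Field L - A)))"
proof -
  let ?S = "Restr L (Field L - A)"
  have rl: "refl_on (Field L) L" using refl_of_lin[OF lin] .
  have FA: "Field (Restr L A) = A" using Field_Restr_refl[OF rl AF] .
  have FS: "Field ?S = Field L - A" using Field_Restr_refl[OF rl] by blast
  have tot: "total_on (Field L) L" using lin unfolding linear_order_on_def by blast
  let ?ti = "inv_into (Field R) \<theta>"
  have ti: "iso_on ?ti (Restr L A) R" using iso_on_inv[OF \<theta>] .
  have tiA: "?ti a \<in> Field R" if "a \<in> A" for a using iso_on_mem[OF ti] that FA by blast
  define \<psi> where "\<psi> a = (if a \<in> A then Inl (?ti a) else Inr a)" for a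
  have "iso_on \<psi> L (osum R ?S)"
    unfolding iso_on_def bij_betw_def
  proof (intro conjI ballI)
    show "inj_on \<psi> (Field L)"
    proof (rule inj_onI)
      fix a b assume ab: "a \<in> Field L" "b \<in> Field L" "\<psi> a = \<psi> b"
      show "a = b"
      proof (cases "a \<in> A")
        case True
        then have "b \<in> A" using ab unfolding \<psi>_def by (cases "b \<in> A") auto
        then have "?ti a = ?ti b" using ab True unfolding \<psi>_def by simp
        then show ?thesis using iso_on_inj[OF ti] True \<open>b \<in> A\<close> FA by blast
      next
        case False
        then have "b \<notin> A" using ab unfolding \<psi>_def by (cases "b \<in> A") auto
        then show ?thesis using ab False unfolding \<psi>_def by simp
      qed
    qed
    show "\<psi> ` Field L = Field (osum R ?S)"
    proof
      show "\<psi> ` Field L \<subseteq> Field (osum R ?S)"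
      proof
        fix z assume "z \<in> \<psi> ` Field L"
        then obtain a where a: "a \<in> Field L" "z = \<psi> a" by blast
        show "z \<in> Field (osum R ?S)"
        proof (cases "a \<in> A")
          case True then show ?thesis using a tiA unfolding \<psi>_def by simp
        next
          case False then show ?thesis using a FS unfolding \<psi>_def by simp
        qed
      qed
      show "Field (osum R ?S) \<subseteq> \<psi> ` Field L"
      proof
        fix z assume z: "z \<in> Field (osum R ?S)"
        show "z \<in> \<psi> ` Field L"
        proof (cases z)
          case (Inl x)
          then have x: "x \<in> Field R" using z by simp
          have "\<theta> x \<in> A" using iso_on_mem[OF \<theta> x] FA by simp
          moreover have "?ti (\<theta> x) = x" using \<theta> x unfolding iso_on_def bij_betw_def by (meson inv_into_f_f)
          ultimately have "\<psi> (\<theta> x) = z" unfolding \<psi>_def using Inl by simp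
          then show ?thesis using \<open>\<theta> x \<in> A\<close> AF by blast
        next
          case (Inr x)
          then have "x \<in> Field L - A" using z FS by simp
          then have "\<psi> x = z" unfolding \<psi>_def using Inr by simp
          then show ?thesis using \<open>x \<in> Field L - A\<close> by blast
        qed
      qed
    qed
    fix a b assume ab: "a \<in> Field L" "b \<in> Field L"
    show "((a, b) \<in> L) = ((\<psi> a, \<psi> b) \<in> osum R ?S)"
    proof (cases "a \<in> A"; cases "b \<in> A")
      assume "a \<in> A" "b \<in> A"
      then have "((a, b) \<in> Restr L A) \<longleftrightarrow> (?ti a, ?ti b) \<in> R" using iso_on_rel[OF ti] FA by blast
      then show ?thesis using \<open>a \<in> A\<close> \<open>b \<in> A\<close> unfolding \<psi>_def by simp
    next
      assume "a \<in> A" "b \<notin> A"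
      have "(a, b) \<in> L"
      proof (rule ccontr)
        assume "(a, b) \<notin> L"
        then have "(b, a) \<in> L" using tot ab unfolding total_on_def by (metis \<open>b \<notin> A\<close> \<open>a \<in> A\<close>)
        then show False using down \<open>a \<in> A\<close> \<open>b \<notin> A\<close> by blast
      qed
      then show ?thesis using \<open>a \<in> A\<close> \<open>b \<notin> A\<close> tiA ab FS unfolding \<psi>_def by simp
    next
      assume "a \<notin> A" "b \<in> A"
      have "(a, b) \<notin> L" using down \<open>a \<notin> A\<close> \<open>b \<in> A\<close> by blast
      then show ?thesis using \<open>a \<notin> A\<close> \<open>b \<in> A\<close> unfolding \<psi>_def by simp
    next
      assume "a \<notin> A" "b \<notin> A"
      then show ?thesis using ab unfolding \<psi>_def by simp
    qed
  qed
  then show ?thesis unfolding ord_iso_iff by blast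
qed

lemma osum_cong1:
  fixes R :: "'a rel" and R' :: "'b rel" and S :: "'c rel"
  assumes \<theta>: "iso_on \<theta> R R'"
  shows "ord_iso (osum R S) (osum R' S)"
proof -
  define \<psi> :: "'a + 'c \<Rightarrow> 'b + 'c" where "\<psi> = map_sum \<theta> id"
  have "iso_on \<psi> (osum R S) (osum R' S)"
    unfolding iso_on_def bij_betw_def
  proof (intro conjI ballI)
    show "inj_on \<psi> (Field (osum R S))"
    proof (rule inj_onI)
      fix a b assume ab: "a \<in> Field (osum R S)" "b \<in> Field (osum R S)" "\<psi> a = \<psi> b"
      show "a = b"
      proof (cases a; cases b)
        fix x y assume "a = Inl x" "b = Inl y"
        then show "a = b" using ab iso_on_inj[OF \<theta>] unfolding \<psi>_def by simp
      qed (use ab in \<open>auto simp: \<psi>_def\<close>)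
    qed
    show "\<psi> ` Field (osum R S) = Field (osum R' S)"
    proof
      show "\<psi> ` Field (osum R S) \<subseteq> Field (osum R' S)"
      proof
        fix z assume "z \<in> \<psi> ` Field (osum R S)"
        then obtain a where a: "a \<in> Field (osum R S)" "z = \<psi> a" by blast
        then show "z \<in> Field (osum R' S)" using iso_on_mem[OF \<theta>] unfolding \<psi>_def by (cases a) auto
      qed
      show "Field (osum R' S) \<subseteq> \<psi> ` Field (osum R S)"
      proof
        fix z assume z: "z \<in> Field (osum R' S)"
        show "z \<in> \<psi> ` Field (osum R S)"
        proof (cases z)
          case (Inl y)
          then obtain x where "x \<in> Field R" "\<theta> x = y" using iso_on_surj[OF \<theta>] z by auto
          then have "\<psi> (Inl x) = z" "Inl x \<in> Field (osum R S)" using Inl unfolding \<psi>_def by auto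
          then show ?thesis by (metis image_eqI)
        next
          case (Inr y)
          then have "\<psi> (Inr y) = z" "Inr y \<in> Field (osum R S)" using z unfolding \<psi>_def by auto
          then show ?thesis by (metis image_eqI)
        qed
      qed
    qed
    fix a b assume ab: "a \<in> Field (osum R S)" "b \<in> Field (osum R S)"
    show "((a, b) \<in> osum R S) = ((\<psi> a, \<psi> b) \<in> osum R' S)"
    proof (cases a; cases b)
      fix x y assume "a = Inl x" "b = Inl y"
      then show ?thesis using ab iso_on_rel[OF \<theta>] unfolding \<psi>_def by simp
    next
      fix x y assume "a = Inl x" "b = Inr y"
      then show ?thesis using ab iso_on_mem[OF \<theta>] unfolding \<psi>_def by simp
    qed (use ab in \<open>auto simp: \<psi>_def\<close>)
  qed
  then show ?thesis unfolding ord_iso_iff by blast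
qed



lemma osum_refl:
  fixes K :: "'b rel"
  assumes Klin: "Linear_order K"
  shows "refl_on (Field (osum (omega_times i) K)) (osum (omega_times i) K)"
  unfolding refl_on_def
proof
  fix z assume z: "z \<in> Field (osum (omega_times i) K)"
  show "(z, z) \<in> osum (omega_times i) K"
  proof (cases z)
    case (Inl a)
    then have "a \<in> Field (omega_times i)" using z by simp
    then have "(a, a) \<in> omega_times i" using refl_of_lin[OF Linear_omega] unfolding refl_on_def by blast
    then show ?thesis using Inl by simp
  next
    case (Inr a)
    then have "a \<in> Field K" using z by simp
    then have "(a, a) \<in> K" using refl_of_lin[OF Klin] unfolding refl_on_def by blast
    then show ?thesis using Inr by simp
  qed
qed

lemma Inr_interval:
  fixes K :: "'b rel" and X :: "'c rel"
  assumes Klin: "Linear_order K"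
    and S: "is_interval (osum (omega_times i) K) S" and SR: "S \<subseteq> Inr ` Field K"
    and iso: "ord_iso X (Restr (osum (omega_times i) K) S)"
  shows "\<exists>SK. is_interval K SK \<and> ord_iso X (Restr K SK)"
proof -
  let ?M = "osum (omega_times i) K"
  define SK where "SK = {k. Inr k \<in> S}"
  have SKF: "SK \<subseteq> Field K" using SR unfolding SK_def by auto
  have Krefl: "refl_on (Field K) K" using refl_of_lin[OF Klin] .
  have MR: "refl_on (Field ?M) ?M" using osum_refl[OF Klin] .
  have SF: "S \<subseteq> Field ?M" using S unfolding is_interval_def by blast
  have FS: "Field (Restr ?M S) = S" using Field_Restr_refl[OF MR SF] .
  have FSK: "Field (Restr K SK) = SK" using Field_Restr_refl[OF Krefl SKF] .
  have S_eq: "S = Inr ` SK" using SR unfolding SK_def by auto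
  have "iso_on Inr (Restr K SK) (Restr ?M S)"
    unfolding iso_on_def FS FSK bij_betw_def
  proof (intro conjI ballI)
    show "inj_on Inr SK" by (rule inj_onI) simp
    show "Inr ` SK = S" using S_eq ..
    fix a b assume "a \<in> SK" "b \<in> SK"
    then show "((a, b) \<in> Restr K SK) = ((Inr a, Inr b) \<in> Restr ?M S)" unfolding SK_def by simp
  qed
  then have 1: "ord_iso X (Restr K SK)" using iso ord_iso_trans ord_iso_sym unfolding ord_iso_iff by metis
  have 2: "is_interval K SK"
    unfolding is_interval_def
  proof (intro conjI SKF ballI allI impI)
    fix x z y assume xz: "x \<in> SK" "z \<in> SK" and y: "(x, y) \<in> K \<and> (y, z) \<in> K"
    then have "(Inr x, Inr y) \<in> ?M \<and> (Inr y, Inr z) \<in> ?M" by simp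
    moreover have "Inr x \<in> S" "Inr z \<in> S" using xz unfolding SK_def by auto
    ultimately have "Inr y \<in> S" using S unfolding is_interval_def by blast
    then show "y \<in> SK" unfolding SK_def by simp
  qed
  show ?thesis using 1 2 by blast
qed



lemma E_core:
  fixes K :: "'b rel"
  assumes Klin: "Linear_order K" and Kg: "\<not> (\<exists>J. is_interval K J \<and> ord_iso (omega_times i) (Restr K J))"
    and i1: "1 \<le> i"
    and J: "is_interval (osum (omega_times i) K) J"
    and H: "iso_on H (omega_times (Suc i)) (Restr (osum (omega_times i) K) J)"
  shows "\<exists>A. A \<subseteq> Field (osum (omega_times i) K) \<and>
     (\<forall>a\<in>A. \<forall>b. (b, a) \<in> osum (omega_times i) K \<longrightarrow> b \<in> A) \<and>
     ord_iso (omega_times (Suc i)) (Restr (osum (omega_times i) K) A)"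
proof -
  let ?M = "osum (omega_times i) K"
  let ?W = "omega_times (Suc i)"
  have MR: "refl_on (Field ?M) ?M" using osum_refl[OF Klin] .
  have JF: "J \<subseteq> Field ?M" using J unfolding is_interval_def by blast
  have FJ: "Field (Restr ?M J) = J" using Field_Restr_refl[OF MR JF] .
  have Hmem: "H \<alpha> \<in> J" if "\<alpha> \<in> Field ?W" for \<alpha> using iso_on_mem[OF H that] FJ by simp
  have Hrel: "(\<alpha>, \<beta>) \<in> ?W \<longleftrightarrow> (H \<alpha>, H \<beta>) \<in> ?M" if "\<alpha> \<in> Field ?W" "\<beta> \<in> Field ?W" for \<alpha> \<beta>
    using iso_on_rel[OF H that] Hmem that by blast
  have Hsurj: "\<exists>\<alpha>\<in>Field ?W. H \<alpha> = p" if "p \<in> J" for p using iso_on_surj[OF H] that FJ by simp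
  have Hinj: "H \<alpha> = H \<beta> \<longleftrightarrow> \<alpha> = \<beta>" if "\<alpha> \<in> Field ?W" "\<beta> \<in> Field ?W" for \<alpha> \<beta>
    using iso_on_inj[OF H that] .
  have HF: "H \<alpha> \<in> Field ?M" if "\<alpha> \<in> Field ?W" for \<alpha> using Hmem[OF that] JF by blast
  have exR: "\<exists>\<alpha>\<in>Field ?W. \<exists>k. H \<alpha> = Inr k"
  proof (rule ccontr)
    assume "\<not> ?thesis"
    then have allL: "\<exists>a. H \<alpha> = Inl a" if "\<alpha> \<in> Field ?W" for \<alpha> using that by (cases "H \<alpha>") auto
    define \<phi> where "\<phi> \<alpha> = projl (H \<alpha>)" for \<alpha>
    have H\<phi>: "H \<alpha> = Inl (\<phi> \<alpha>)" if "\<alpha> \<in> Field ?W" for \<alpha> using allL[OF that] unfolding \<phi>_def by auto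
    have into: "\<forall>\<alpha>\<in>Field ?W. \<phi> \<alpha> \<in> Field (omega_times i)"
      using HF H\<phi> by (metis Field_osum_L)
    have rel: "\<forall>\<alpha>\<in>Field ?W. \<forall>\<beta>\<in>Field ?W. (H \<alpha>, H \<beta>) \<in> Restr ?M J \<longrightarrow> (\<phi> \<alpha>, \<phi> \<beta>) \<in> omega_times i"
      using H\<phi> by (metis IntD1 osum_LL)
    have inj: "inj_on \<phi> (Field ?W)"
    proof (rule inj_onI)
      fix \<alpha> \<beta> assume "\<alpha> \<in> Field ?W" "\<beta> \<in> Field ?W" "\<phi> \<alpha> = \<phi> \<beta>"
      then show "\<alpha> = \<beta>" using H\<phi> Hinj by metis
    qed
    have "\<forall>\<alpha>\<in>Field ?W. \<forall>\<beta>\<in>Field ?W. (\<alpha>, \<beta>) \<in> lexR \<longrightarrow> (\<phi> \<alpha>, \<phi> \<beta>) \<in> lexR"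
      using iso_lexR[OF H into rel inj] .
    then show False using no_emb[of i "Suc i" \<phi>] into by simp
  qed
  have exL: "\<exists>\<alpha>\<in>Field ?W. \<exists>a. H \<alpha> = Inl a"
  proof (rule ccontr)
    assume "\<not> ?thesis"
    then have allR: "\<exists>k. H \<alpha> = Inr k" if "\<alpha> \<in> Field ?W" for \<alpha> using that by (cases "H \<alpha>") auto
    define D where "D = {\<alpha>::nat \<times> nat. fst \<alpha> < i}"
    have DF: "D \<subseteq> Field ?W" unfolding D_def Field_omega by auto
    have Dint: "is_interval ?W D"
      unfolding is_interval_def
    proof (intro conjI DF ballI allI impI)
      fix x z y assume "x \<in> D" "z \<in> D" "(x, y) \<in> ?W \<and> (y, z) \<in> ?W"
      then show "y \<in> D" unfolding D_def by (cases x; cases y; cases z) (auto simp: omega_mem)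
    qed
    define S where "S = H ` D"
    have SJ: "S \<subseteq> J" unfolding S_def using Hmem DF by blast
    have S1: "is_interval (Restr ?M J) S" unfolding S_def using iso_on_interval[OF H Dint] .
    have S2: "is_interval ?M S" using interval_Restr_trans[OF J S1] .
    have WR: "refl_on (Field ?W) ?W" using refl_of_lin[OF Linear_omega] .
    have MJR: "refl_on (Field (Restr ?M J)) (Restr ?M J)" unfolding FJ using MR JF unfolding refl_on_def by blast
    have "iso_on H (Restr ?W D) (Restr (Restr ?M J) S)" unfolding S_def using iso_on_Restr[OF H WR MJR DF] .
    moreover have "Restr ?W D = omega_times i" unfolding D_def using Restr_omega .
    moreover have "Restr (Restr ?M J) S = Restr ?M S" using Restr_Restr[OF SJ] .
    ultimately have iso: "ord_iso (omega_times i) (Restr ?M S)" unfolding ord_iso_iff by metis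
    have SR: "S \<subseteq> Inr ` Field K"
    proof
      fix p assume "p \<in> S"
      then obtain \<alpha> where a: "\<alpha> \<in> D" "p = H \<alpha>" unfolding S_def by blast
      then obtain k where "H \<alpha> = Inr k" using allR DF by blast
      moreover have "H \<alpha> \<in> Field ?M" using HF a DF by blast
      ultimately show "p \<in> Inr ` Field K" using a by simp
    qed
    show False using Inr_interval[OF Klin S2 SR iso] Kg by blast
  qed
  define Q where "Q = {\<alpha> \<in> Field ?W. \<exists>k. H \<alpha> = Inr k}"
  obtain \<alpha>1 where "\<alpha>1 \<in> Q" using exR unfolding Q_def by blast
  obtain \<alpha>0 where a0: "\<alpha>0 \<in> Q" and a0min: "\<And>\<beta>. (\<beta>, \<alpha>0) \<in> lexR \<Longrightarrow> \<beta> \<notin> Q"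
    using wfE_min[OF wf_lex_prod[OF wf_less_than wf_less_than] \<open>\<alpha>1 \<in> Q\<close>] by blast
  obtain k0 n0 where a0e: "\<alpha>0 = (k0, n0)" by (cases \<alpha>0)
  have k0: "k0 < Suc i" using a0 a0e unfolding Q_def Field_omega by simp
  define am where "am m = (k0, n0 + m)" for m
  have amF: "am m \<in> Field ?W" for m unfolding am_def Field_omega using k0 by simp
  have amR: "\<exists>k. H (am m) = Inr k" for m
  proof -
    have "(\<alpha>0, am m) \<in> ?W" unfolding a0e am_def using k0 by (simp add: omega_mem)
    then have "(H \<alpha>0, H (am m)) \<in> ?M" using Hrel a0 amF unfolding Q_def by blast
    moreover obtain k where "H \<alpha>0 = Inr k" using a0 unfolding Q_def by blast
    ultimately show ?thesis by (cases "H (am m)") auto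
  qed
  obtain \<alpha>w aw where aw: "\<alpha>w \<in> Field ?W" "H \<alpha>w = Inl aw" using exL by blast
  have awF: "aw \<in> Field (omega_times i)" using HF[OF aw(1)] aw(2) by simp
  define A where "A = Inl ` Field (omega_times i) \<union> range (\<lambda>m. H (am m))"
  have AF: "A \<subseteq> Field ?M" unfolding A_def using HF[OF amF] by auto
  have down: "\<forall>a\<in>A. \<forall>b. (b, a) \<in> ?M \<longrightarrow> b \<in> A"
  proof (intro ballI allI impI)
    fix p p' assume p: "p \<in> A" and pp: "(p', p) \<in> ?M"
    have p'F: "p' \<in> Field ?M" using pp by (blast intro: FieldI1)
    show "p' \<in> A"
    proof (cases p')
      case (Inl x)
      then have "x \<in> Field (omega_times i)" using p'F by simp
      then show ?thesis using Inl unfolding A_def by blast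
    next
      case (Inr k')
      have "p \<notin> Inl ` Field (omega_times i)" using pp Inr by auto
      then obtain m where pm: "p = H (am m)" using p unfolding A_def by blast
      have k'F: "k' \<in> Field K" using p'F Inr by simp
      have "(H \<alpha>w, p') \<in> ?M" using aw(2) Inr awF k'F by simp
      then have "p' \<in> J" using J Hmem[OF aw(1)] Hmem[OF amF] pm pp unfolding is_interval_def by blast
      then obtain \<beta> where \<beta>: "\<beta> \<in> Field ?W" "H \<beta> = p'" using Hsurj by blast
      have "\<beta> \<in> Q" unfolding Q_def using \<beta> Inr by blast
      then have nl: "(\<beta>, \<alpha>0) \<notin> lexR" using a0min by blast
      have "(\<beta>, am m) \<in> ?W" using Hrel[OF \<beta>(1) amF] \<beta>(2) pm pp by simp
      obtain k n where \<beta>e: "\<beta> = (k, n)" by (cases \<beta>)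
      have "k < k0 \<or> (k = k0 \<and> n \<le> n0 + m)" using \<open>(\<beta>, am m) \<in> ?W\<close> \<beta>e unfolding am_def by (simp add: omega_mem)
      moreover have "\<not> (k < k0 \<or> (k = k0 \<and> n < n0))" using nl \<beta>e a0e by simp
      ultimately have "k = k0" "n0 \<le> n" by auto
      then have "\<beta> = am (n - n0)" unfolding am_def using \<beta>e by simp
      then show ?thesis using \<beta>(2) unfolding A_def by blast
    qed
  qed
  define \<psi> where "\<psi> \<alpha> = (if fst \<alpha> < i then Inl \<alpha> else H (am (snd \<alpha>)))" for \<alpha>
  have FA: "Field (Restr ?M A) = A" using Field_Restr_refl[OF MR AF] .
  have \<psi>A: "\<psi> \<alpha> \<in> A" if "\<alpha> \<in> Field ?W" for \<alpha>
  proof (cases "fst \<alpha> < i")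
    case True then have "\<alpha> \<in> Field (omega_times i)" unfolding Field_omega by simp
    then show ?thesis using True unfolding \<psi>_def A_def by simp
  next
    case False then show ?thesis unfolding \<psi>_def A_def by simp
  qed
  have amInr: "H (am m) \<notin> range Inl" for m using amR[of m] by auto
  have iso: "iso_on \<psi> ?W (Restr ?M A)"
    unfolding iso_on_def FA bij_betw_def
  proof (intro conjI ballI)
    show "inj_on \<psi> (Field ?W)"
    proof (rule inj_onI)
      fix \<alpha> \<beta> assume ab: "\<alpha> \<in> Field ?W" "\<beta> \<in> Field ?W" "\<psi> \<alpha> = \<psi> \<beta>"
      obtain k n where ae: "\<alpha> = (k, n)" by (cases \<alpha>)
      obtain k' n' where be: "\<beta> = (k', n')" by (cases \<beta>)
      have kk: "k < Suc i" "k' < Suc i" using ab ae be unfolding Field_omega by auto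
      show "\<alpha> = \<beta>"
      proof (cases "k < i"; cases "k' < i")
        assume "k < i" "k' < i" then show ?thesis using ab ae be unfolding \<psi>_def by simp
      next
        assume "k < i" "\<not> k' < i"
        then have "\<psi> \<alpha> = Inl \<alpha>" "\<psi> \<beta> = H (am n')" using ae be unfolding \<psi>_def by auto
        then show ?thesis using ab(3) amInr[of n'] by (metis rangeI)
      next
        assume "\<not> k < i" "k' < i"
        then have "\<psi> \<alpha> = H (am n)" "\<psi> \<beta> = Inl \<beta>" using ae be unfolding \<psi>_def by auto
        then show ?thesis using ab(3) amInr[of n] by (metis rangeI)
      next
        assume "\<not> k < i" "\<not> k' < i"
        then have "H (am n) = H (am n')" "k = i" "k' = i" using ab ae be kk unfolding \<psi>_def by auto
        then have "am n = am n'" using Hinj amF by blast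
        then show ?thesis using ae be \<open>k = i\<close> \<open>k' = i\<close> unfolding am_def by simp
      qed
    qed
    show "\<psi> ` Field ?W = A"
    proof
      show "\<psi> ` Field ?W \<subseteq> A" using \<psi>A by blast
      show "A \<subseteq> \<psi> ` Field ?W"
      proof
        fix p assume "p \<in> A"
        then consider (l) x where "x \<in> Field (omega_times i)" "p = Inl x" | (r) m where "p = H (am m)"
          unfolding A_def by blast
        then show "p \<in> \<psi> ` Field ?W"
        proof cases
          case l
          then have "fst x < i" unfolding Field_omega by simp
          then have "\<psi> x = p" "x \<in> Field ?W" using l unfolding \<psi>_def Field_omega by auto
          then show ?thesis by (metis image_eqI)
        next
          case r
          have "\<psi> (i, m) = p" "(i, m) \<in> Field ?W" using r unfolding \<psi>_def Field_omega by auto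
          then show ?thesis by (metis image_eqI)
        qed
      qed
    qed
    fix \<alpha> \<beta> assume ab: "\<alpha> \<in> Field ?W" "\<beta> \<in> Field ?W"
    obtain k n where ae: "\<alpha> = (k, n)" by (cases \<alpha>)
    obtain k' n' where be: "\<beta> = (k', n')" by (cases \<beta>)
    have kk: "k < Suc i" "k' < Suc i" using ab ae be unfolding Field_omega by auto
    have inA: "\<psi> \<alpha> \<in> A" "\<psi> \<beta> \<in> A" using \<psi>A ab by blast+
    have "((\<alpha>, \<beta>) \<in> ?W) = ((\<psi> \<alpha>, \<psi> \<beta>) \<in> ?M)"
    proof (cases "k < i"; cases "k' < i")
      assume "k < i" "k' < i" then show ?thesis using ae be unfolding \<psi>_def by (simp add: omega_mem)
    next
      assume a: "k < i" "\<not> k' < i"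
      obtain kk' where e: "H (am n') = Inr kk'" using amR by blast
      have "kk' \<in> Field K" using HF[OF amF[of n']] e by simp
      then show ?thesis using a ae be e kk unfolding \<psi>_def by (simp add: omega_mem Field_omega)
    next
      assume a: "\<not> k < i" "k' < i"
      obtain kk where e: "H (am n) = Inr kk" using amR by blast
      show ?thesis using a ae be e kk unfolding \<psi>_def by (simp add: omega_mem)
    next
      assume a: "\<not> k < i" "\<not> k' < i"
      then have "k = i" "k' = i" using kk by auto
      have "(\<alpha>, \<beta>) \<in> ?W \<longleftrightarrow> (am n, am n') \<in> ?W" using ae be \<open>k = i\<close> \<open>k' = i\<close> k0 unfolding am_def by (simp add: omega_mem)
      also have "\<dots> \<longleftrightarrow> (H (am n), H (am n')) \<in> ?M" using Hrel amF by blast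
      finally show ?thesis using a ae be unfolding \<psi>_def by simp
    qed
    then show "((\<alpha>, \<beta>) \<in> ?W) = ((\<psi> \<alpha>, \<psi> \<beta>) \<in> Restr ?M A)" using inA by blast
  qed
  show ?thesis using AF down iso unfolding ord_iso_iff by blast
qed



lemma moreover_shuf:
  fixes L :: "'i \<Rightarrow> 'a rel" and c :: "rat \<Rightarrow> 'i"
  assumes lin: "\<forall>q. Linear_order (L (c q))" and gf: "\<forall>q. good_form i (L (c q))" and i1: "1 \<le> i"
    and J: "is_interval (shuf_col c L) J" and iso: "ord_iso (omega_times (Suc i)) (Restr (shuf_col c L) J)"
  shows "\<exists>x. \<exists>K :: 'a rel. Linear_order K \<and> ord_iso (L (c x)) (osum (omega_times (Suc i)) K)"
proof -
  let ?r = "shuf_col c L"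
  have refl: "\<forall>q. refl_on (Field (L (c q))) (L (c q))" using lin refl_of_lin by blast
  have rr: "refl_on (Field ?r) ?r" using shuf_refl[of L c, OF lin] .
  have FS: "(z, d) \<in> Field ?r \<longleftrightarrow> d \<in> Field (L (c z))" for z d using Field_shuf_mem[of L c, OF refl] .
  have ne: "\<forall>q. \<exists>a. a \<in> Field (L (c q))" using gf_nonempty gf i1 by blast
  have JF: "J \<subseteq> Field ?r" using J unfolding is_interval_def by blast
  have FJ: "Field (Restr ?r J) = J" using Field_Restr_refl[OF rr JF] .
  obtain H0 where H0: "iso_on H0 (omega_times (Suc i)) (Restr ?r J)" using iso unfolding ord_iso_iff by blast
  have z: "(0, 0) \<in> Field (omega_times (Suc i))" unfolding Field_omega by simp
  define p0 where "p0 = H0 (0, 0)"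
  have p0J: "p0 \<in> J" unfolding p0_def using iso_on_mem[OF H0 z] FJ by simp
  define x where "x = fst p0"
  let ?Lx = "L (c x)"
  let ?B = "{p. fst p = x \<and> snd p \<in> Field ?Lx}"
  have JB: "J \<subseteq> ?B"
  proof
    fix t assume t: "t \<in> J"
    obtain y b where te: "t = (y, b)" by (cases t)
    have "x = y" unfolding x_def using wf_interval_block[of L c J "Suc i" "fst p0" "snd p0" y b] refl ne J iso p0J t te
      by simp
    moreover have "snd t \<in> Field (L (c (fst t)))" using JF t FS te by auto
    ultimately show "t \<in> ?B" using te by simp
  qed
  have BF: "?B \<subseteq> Field ?r" using FS by auto
  have e: "iso_on (\<lambda>a. (x, a)) ?Lx (Restr ?r ?B)" using block_emb[of L c x, OF lin] .
  let ?G = "inv_into (Field ?Lx) (\<lambda>a. (x, a))"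
  have G: "iso_on ?G (Restr ?r ?B) ?Lx" using iso_on_inv[OF e] .
  have J1: "is_interval (Restr ?r ?B) J" using interval_sub[OF rr J JB BF] .
  have JL: "is_interval ?Lx (?G ` J)" using iso_on_interval[OF G J1] .
  have FB: "Field (Restr ?r ?B) = ?B" using Field_Restr_refl[OF rr BF] .
  have rB: "refl_on (Field (Restr ?r ?B)) (Restr ?r ?B)" unfolding FB using rr BF unfolding refl_on_def by blast
  have Lxr: "refl_on (Field ?Lx) ?Lx" using refl by blast
  have JB': "J \<subseteq> Field (Restr ?r ?B)" using JB FB by simp
  have "iso_on ?G (Restr (Restr ?r ?B) J) (Restr ?Lx (?G ` J))" using iso_on_Restr[OF G rB Lxr JB'] .
  then have i2: "ord_iso (Restr ?r J) (Restr ?Lx (?G ` J))" unfolding Restr_Restr[OF JB] ord_iso_iff by blast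
  obtain K :: "'a rel" and g where g: "iso_on g ?Lx (osum (omega_times i) K)"
    and Klin: "Linear_order K" and Kg: "\<not> (\<exists>J. is_interval K J \<and> ord_iso (omega_times i) (Restr K J))"
    using gf_obtain[of i ?Lx] gf by metis
  let ?M = "osum (omega_times i) K"
  have MR: "refl_on (Field ?M) ?M" using osum_refl[OF Klin] .
  have JLF: "?G ` J \<subseteq> Field ?Lx" using JL unfolding is_interval_def by blast
  have JM: "is_interval ?M (g ` ?G ` J)" using iso_on_interval[OF g JL] .
  have "iso_on g (Restr ?Lx (?G ` J)) (Restr ?M (g ` ?G ` J))" using iso_on_Restr[OF g Lxr MR JLF] .
  then have i3: "ord_iso (Restr ?Lx (?G ` J)) (Restr ?M (g ` ?G ` J))" unfolding ord_iso_iff by blast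
  have "ord_iso (omega_times (Suc i)) (Restr ?M (g ` ?G ` J))"
    using ord_iso_trans[OF ord_iso_trans[OF iso i2] i3] .
  then obtain H where H: "iso_on H (omega_times (Suc i)) (Restr ?M (g ` ?G ` J))" unfolding ord_iso_iff by blast
  obtain A where A: "A \<subseteq> Field ?M" "\<forall>a\<in>A. \<forall>b. (b, a) \<in> ?M \<longrightarrow> b \<in> A"
    "ord_iso (omega_times (Suc i)) (Restr ?M A)"
    using E_core[OF Klin Kg i1 JM H] by blast
  define AL where "AL = {b \<in> Field ?Lx. g b \<in> A}"
  have ALF: "AL \<subseteq> Field ?Lx" unfolding AL_def by blast
  have gAL: "g ` AL = A"
  proof
    show "g ` AL \<subseteq> A" unfolding AL_def by blast
    show "A \<subseteq> g ` AL"
    proof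
      fix a assume a: "a \<in> A"
      then obtain b where "b \<in> Field ?Lx" "g b = a" using iso_on_surj[OF g] A(1) by blast
      then show "a \<in> g ` AL" unfolding AL_def using a by blast
    qed
  qed
  have downL: "\<forall>a\<in>AL. \<forall>b. (b, a) \<in> ?Lx \<longrightarrow> b \<in> AL"
  proof (intro ballI allI impI)
    fix a b assume a: "a \<in> AL" and ba: "(b, a) \<in> ?Lx"
    have bF: "b \<in> Field ?Lx" using ba by (blast intro: FieldI1)
    have "(g b, g a) \<in> ?M" using iso_on_rel[OF g bF] a ALF ba by blast
    then have "g b \<in> A" using A(2) a unfolding AL_def by blast
    then show "b \<in> AL" unfolding AL_def using bF by blast
  qed
  have "iso_on g (Restr ?Lx AL) (Restr ?M (g ` AL))" using iso_on_Restr[OF g Lxr MR ALF] .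
  then have "ord_iso (Restr ?Lx AL) (Restr ?M A)" unfolding gAL ord_iso_iff by blast
  then have "ord_iso (omega_times (Suc i)) (Restr ?Lx AL)" using A(3) ord_iso_trans ord_iso_sym by blast
  then obtain \<theta> where \<theta>: "iso_on \<theta> (omega_times (Suc i)) (Restr ?Lx AL)" unfolding ord_iso_iff by blast
  have lx: "Linear_order ?Lx" using lin by blast
  have d: "ord_iso ?Lx (osum (omega_times (Suc i)) (Restr ?Lx (Field ?Lx - AL)))"
    using decomp[OF lx ALF downL \<theta>] .
  have "Linear_order (Restr ?Lx (Field ?Lx - AL))" using Linear_order_Restr[OF lx] .
  then show ?thesis using d by blast
qed



lemma dense_facts:
  assumes "countable I" "I \<noteq> {}"
  shows "\<forall>x. (SOME c. dense_coloring I c) x \<in> I"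
    and "\<forall>x y. x < y \<longrightarrow> (\<forall>j\<in>I. \<exists>z. x < z \<and> z < y \<and> (SOME c. dense_coloring I c) z = j)"
    and "\<forall>j\<in>I. \<exists>x. (SOME c. dense_coloring I c) x = j"
proof -
  have d: "dense_coloring I (SOME c. dense_coloring I c)" using Shuf_dense[OF assms] .
  show "\<forall>x. (SOME c. dense_coloring I c) x \<in> I" using d unfolding dense_coloring_def by blast
  show dd: "\<forall>x y. x < y \<longrightarrow> (\<forall>j\<in>I. \<exists>z. x < z \<and> z < y \<and> (SOME c. dense_coloring I c) z = j)"
    using d unfolding dense_coloring_def by blast
  show "\<forall>j\<in>I. \<exists>x. (SOME c. dense_coloring I c) x = j"
  proof
    fix j assume "j \<in> I"
    then show "\<exists>x. (SOME c. dense_coloring I c) x = j" using dd[rule_format, of 0 1 j] by auto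
  qed
qed

theorem lemma13:
  fixes i :: nat and I1 :: "'i set" and L1 :: "'i \<Rightarrow> 'a rel"
    and I2 :: "'j set" and L2 :: "'j \<Rightarrow> 'b rel"
  assumes "i \<ge> 1"
    and "countable I1" and "I1 \<noteq> {}" and "countable I2" and "I2 \<noteq> {}"
    and "\<forall>j\<in>I1. Linear_order (L1 j) \<and> good_form i (L1 j)"
    and "\<forall>j\<in>I2. Linear_order (L2 j) \<and> good_form i (L2 j)"
  shows "(class_eq I1 L1 I2 L2 \<longleftrightarrow> ord_iso (Shuf I1 L1) (Shuf I2 L2))
    \<and> ((\<exists>J. is_interval (Shuf I1 L1) J \<and> ord_iso (omega_times (i + 1)) (Restr (Shuf I1 L1) J))
        \<longrightarrow> (\<exists>j\<in>I1. \<exists>K :: 'a rel. Linear_order K \<and> ord_iso (L1 j) (osum (omega_times (i + 1)) K)))"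
proof -
  define c1 where "c1 = (SOME c. dense_coloring I1 c)"
  define c2 where "c2 = (SOME c. dense_coloring I2 c)"
  have S1: "Shuf I1 L1 = shuf_col c1 L1" unfolding Shuf_def c1_def ..
  have S2: "Shuf I2 L2 = shuf_col c2 L2" unfolding Shuf_def c2_def ..
  have col1: "\<forall>x. c1 x \<in> I1" and dens1: "\<forall>x y. x < y \<longrightarrow> (\<forall>j\<in>I1. \<exists>z. x < z \<and> z < y \<and> c1 z = j)"
    and sur1: "\<forall>j\<in>I1. \<exists>x. c1 x = j" using dense_facts[OF assms(2,3)] unfolding c1_def by blast+
  have col2: "\<forall>x. c2 x \<in> I2" and dens2: "\<forall>x y. x < y \<longrightarrow> (\<forall>j\<in>I2. \<exists>z. x < z \<and> z < y \<and> c2 z = j)"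
    and sur2: "\<forall>j\<in>I2. \<exists>x. c2 x = j" using dense_facts[OF assms(4,5)] unfolding c2_def by blast+
  have lin1: "\<forall>q. Linear_order (L1 (c1 q))" and gf1: "\<forall>q. good_form i (L1 (c1 q))"
    using assms(6) col1 by blast+
  have lin2: "\<forall>q. Linear_order (L2 (c2 q))" and gf2: "\<forall>q. good_form i (L2 (c2 q))"
    using assms(7) col2 by blast+
  have i1: "1 \<le> i" using assms(1) .
  have part1: "class_eq I1 L1 I2 L2 \<longleftrightarrow> ord_iso (shuf_col c1 L1) (shuf_col c2 L2)"
  proof
    assume ce: "class_eq I1 L1 I2 L2"
    have tot1: "\<forall>a\<in>I1. \<exists>b\<in>I2. ord_iso (L1 a) (L2 b)" using ce unfolding class_eq_def by blast
    have tot2: "\<forall>b\<in>I2. \<exists>a\<in>I1. ord_iso (L1 a) (L2 b)" using ce ord_iso_sym unfolding class_eq_def by blast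
    obtain \<phi> where \<phi>: "\<forall>r. \<exists>q. \<phi> q = r" "\<forall>q q'. q < q' \<longrightarrow> \<phi> q < \<phi> q'" "\<forall>q. ord_iso (L1 (c1 q)) (L2 (c2 (\<phi> q)))"
      using back_and_forth[of I1 c1 I2 c2 "\<lambda>a b. ord_iso (L1 a) (L2 b)", OF dens1 col1 dens2 col2 tot1 tot2] by blast
    show "ord_iso (shuf_col c1 L1) (shuf_col c2 L2)" using shuf_iso[of L1 c1 L2 c2, OF lin1 lin2 \<phi>] .
  next
    assume "ord_iso (shuf_col c1 L1) (shuf_col c2 L2)"
    then obtain F where F: "iso_on F (shuf_col c1 L1) (shuf_col c2 L2)" unfolding ord_iso_iff by blast
    have G: "iso_on (inv_into (Field (shuf_col c1 L1)) F) (shuf_col c2 L2) (shuf_col c1 L1)"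
      using iso_on_inv[OF F] .
    show "class_eq I1 L1 I2 L2"
      unfolding class_eq_def
    proof (intro conjI ballI)
      fix j assume "j \<in> I1"
      then obtain x where x: "c1 x = j" using sur1 by blast
      obtain y where "ord_iso (L1 (c1 x)) (L2 (c2 y))" using block_map[of L1 c1 i L2 c2, OF lin1 gf1 lin2 gf2 i1 F] by blast
      then show "\<exists>k\<in>I2. ord_iso (L1 j) (L2 k)" using x col2 by blast
    next
      fix k assume "k \<in> I2"
      then obtain x where x: "c2 x = k" using sur2 by blast
      obtain y where "ord_iso (L2 (c2 x)) (L1 (c1 y))" using block_map[of L2 c2 i L1 c1, OF lin2 gf2 lin1 gf1 i1 G] by blast
      then show "\<exists>j\<in>I1. ord_iso (L2 k) (L1 j)" using x col1 by blast
    qed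
  qed
  have part2: "(\<exists>J. is_interval (shuf_col c1 L1) J \<and> ord_iso (omega_times (Suc i)) (Restr (shuf_col c1 L1) J))
        \<longrightarrow> (\<exists>j\<in>I1. \<exists>K :: 'a rel. Linear_order K \<and> ord_iso (L1 j) (osum (omega_times (Suc i)) K))"
  proof
    assume "\<exists>J. is_interval (shuf_col c1 L1) J \<and> ord_iso (omega_times (Suc i)) (Restr (shuf_col c1 L1) J)"
    then obtain J where J: "is_interval (shuf_col c1 L1) J" "ord_iso (omega_times (Suc i)) (Restr (shuf_col c1 L1) J)"
      by blast
    obtain x and K :: "'a rel" where "Linear_order K" "ord_iso (L1 (c1 x)) (osum (omega_times (Suc i)) K)"
      using moreover_shuf[of L1 c1 i, OF lin1 gf1 i1 J] by blast
    then show "\<exists>j\<in>I1. \<exists>K :: 'a rel. Linear_order K \<and> ord_iso (L1 j) (osum (omega_times (Suc i)) K)"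
      using col1 by blast
  qed
  show ?thesis using part1 part2 unfolding S1 S2 by simp
qed

end
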